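(* Let $3\le n\le k$ be integers, let $X$ be the discrete-time Markov chain on $\mathbb{N}^{n-1}$ described in the context and $Y$ the chain embedded in $X$ at its visits to $S$. For $b\in\mathbb{R}$ let $V(\mathbf{x})=\sum_{i=1}^{n-1}x_i^2+b\sum_{1\le i<l\le n-1}x_ix_l$ and, for $\mathbf{x}\in S$, $\Delta_V(\mathbf{x})=\mathbb{E}[V(\mathbf{Y}_{t+1})-V(\mathbf{x})\mid \mathbf{Y}_t=\mathbf{x}]$. Then for $\mathbf{x}\in S\setminus S^\star$, $$k\,\Delta_V(\mathbf{x})=-(k-n)(2+b(n-2))\sum_{i=1}^{n-1}x_i+(n-1)\Big(k-n+2+b\frac{(k-n+1)(n-2)}{2}\Big),$$ and for $j=1,\dots,n-2$ and $\mathbf{x}_j'=(1,\dots,1,x_{j+1},\dots,x_{n-1})$ (first $j$ entries equal to $1$, $x_i\ge2$ for $i=j+1,\dots,n-1$), $$k\,\Delta_V(\mathbf{x}_j')=\Big[(k-n+1)(2+b(k-1))\sum_{i=2}^{j+1}\frac{1}{k-n+i}-(k-n)(2+b(n-2))\Big]\sum_{i=j+1}^{n-1}x_i+\delta_j,$$ where each $\delta_j$ is a real number independent of $x_{j+1},\dots,x_{n-1}$ and $\max_{1\le j\le n-2}|\delta_j|<\infty$.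
   Context: $\mathbb{N}=\{0,1,2,\dots\}$. $\mathbf{0}$, $\mathbf{1}$ are the all-zero and all-one vectors of dimension $n-1$, $\mathbf{e}_l$ the $l$-th unit vector. For $j=0,\dots,n-1$, $R_j$ is the set of $\mathbf{x}\in\mathbb{N}^{n-1}$ with exactly $j$ zero entries. $X=\{\mathbf{X}_t\}_{t\ge1}$ is the Markov chain on $\mathbb{N}^{n-1}$ with nonzero transition probabilities: from $\mathbf{x}\in R_0$, to $\mathbf{x}-\mathbf{1}$ w.p. $\frac{k-(n-1)}{k}$ and to $\mathbf{x}+\mathbf{e}_l$ w.p. $\frac1k$ ($l=1,\dots,n-1$); from $\mathbf{x}\in R_j$, $1\le j\le n-2$, to $\mathbf{x}+\mathbf{e}_l$ w.p. $\frac{k-(n-1-j)}{kj}$ if $x_l=0$ and w.p. $\frac1k$ if $x_l\ge1$; from $\mathbf{0}$ to $\mathbf{e}_l$ w.p. $\frac1{n-1}$. $S=\{\mathbf{x}:x_i\ge1\ \forall i\}$ and $S^\star=\{\mathbf{x}\in S:\mathbf{x}-\mathbf{1}\notin S\}$ (elements of $S$ with some entry equal to $1$). The embedded chain is $\mathbf{Y}_t=\mathbf{X}_{\sigma_t}$, where $\sigma_t=\min\{m\ge1:\sum_{i=1}^m\mathds{1}_{\{\mathbf{X}_i\in S\}}=t\}$; it is a Markov chain on $S$. *)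

theory Defs
  imports "HOL-Analysis.Analysis"
begin

text \<open>States of the chain on \<open>\<nat>^(n-1)\<close> are represented as functions \<open>nat \<Rightarrow> nat\<close>
  whose coordinates are indexed by \<open>1..n-1\<close> and which vanish outside this range.\<close>

definition states :: "nat \<Rightarrow> (nat \<Rightarrow> nat) set" where
  "states n = {x. \<forall>i. i \<notin> {1..n-1} \<longrightarrow> x i = 0}"

definition num_zeros :: "nat \<Rightarrow> (nat \<Rightarrow> nat) \<Rightarrow> nat" where
  "num_zeros n x = card {i \<in> {1..n-1}. x i = 0}"

definition unit_vec :: "nat \<Rightarrow> nat \<Rightarrow> nat" where
  "unit_vec l = (\<lambda>i. if i = l then 1 else 0)"

definition vec_add :: "(nat \<Rightarrow> nat) \<Rightarrow> (nat \<Rightarrow> nat) \<Rightarrow> nat \<Rightarrow> nat" where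
  "vec_add x y = (\<lambda>i. x i + y i)"

text \<open>\<open>x - 1\<close> (only applied to states with all coordinates \<open>\<ge> 1\<close>).\<close>
definition minus_ones :: "nat \<Rightarrow> (nat \<Rightarrow> nat) \<Rightarrow> nat \<Rightarrow> nat" where
  "minus_ones n x = (\<lambda>i. if i \<in> {1..n-1} then x i - 1 else x i)"

definition transX :: "nat \<Rightarrow> nat \<Rightarrow> (nat \<Rightarrow> nat) \<Rightarrow> (nat \<Rightarrow> nat) \<Rightarrow> real" where
  "transX n k x y =
    (if x \<notin> states n then 0
     else if num_zeros n x = 0 then
       (if y = minus_ones n x then (real k - (real n - 1)) / real k
        else if (\<exists>l\<in>{1..n-1}. y = vec_add x (unit_vec l)) then 1 / real k
        else 0)
     else if num_zeros n x \<le> n - 2 then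
       (if (\<exists>l\<in>{1..n-1}. y = vec_add x (unit_vec l)) then
          (if x (THE l. l \<in> {1..n-1} \<and> y = vec_add x (unit_vec l)) = 0
           then (real k - (real n - 1 - real (num_zeros n x))) / (real k * real (num_zeros n x))
           else 1 / real k)
        else 0)
     else
       (if (\<exists>l\<in>{1..n-1}. y = unit_vec l) then 1 / (real n - 1) else 0))"

definition inS :: "nat \<Rightarrow> (nat \<Rightarrow> nat) \<Rightarrow> bool" where
  "inS n x \<longleftrightarrow> x \<in> states n \<and> (\<forall>i\<in>{1..n-1}. 1 \<le> x i)"

definition inSstar :: "nat \<Rightarrow> (nat \<Rightarrow> nat) \<Rightarrow> bool" where
  "inSstar n x \<longleftrightarrow> inS n x \<and> \<not> inS n (minus_ones n x)"

fun path_prob :: "nat \<Rightarrow> nat \<Rightarrow> (nat \<Rightarrow> nat) \<Rightarrow> (nat \<Rightarrow> nat) list \<Rightarrow> real" where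
  "path_prob n k x [] = 1"
| "path_prob n k x (z # zs) = transX n k x z * path_prob n k z zs"

text \<open>Paths from the current state to the first subsequent visit of S (one step of Y).\<close>
definition first_return_paths :: "nat \<Rightarrow> (nat \<Rightarrow> nat) list set" where
  "first_return_paths n = {zs. zs \<noteq> [] \<and> inS n (last zs) \<and> (\<forall>z\<in>set (butlast zs). \<not> inS n z)}"

definition Vfun :: "real \<Rightarrow> nat \<Rightarrow> (nat \<Rightarrow> nat) \<Rightarrow> real" where
  "Vfun b n x = (\<Sum>i=1..n-1. real (x i) ^ 2)
      + b * (\<Sum>i=1..n-1. \<Sum>l=i+1..n-1. real (x i) * real (x l))"

definition DeltaV :: "nat \<Rightarrow> nat \<Rightarrow> real \<Rightarrow> (nat \<Rightarrow> nat) \<Rightarrow> real" where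
  "DeltaV n k b x = (\<Sum>\<^sub>\<infinity> zs \<in> first_return_paths n.
      path_prob n k x zs * (Vfun b n (last zs) - Vfun b n x))"

end

theory Submission
  imports Defs
begin

locale ch =
  fixes n k :: nat
  assumes n3: "3 \<le> n" and nk: "n \<le> k"
begin

abbreviation "T \<equiv> transX n k"
abbreviation "P \<equiv> path_prob n k"
abbreviation "FRP \<equiv> first_return_paths n"
abbreviation "nz \<equiv> num_zeros n"
abbreviation "e \<equiv> unit_vec"

definition Ex :: "(nat \<Rightarrow> nat) \<Rightarrow> ((nat \<Rightarrow> nat) \<Rightarrow> real) \<Rightarrow> real" where
  "Ex y g = (\<Sum>\<^sub>\<infinity> zs\<in>FRP. P y zs * g (last zs))"

definition succ :: "(nat \<Rightarrow> nat) \<Rightarrow> (nat \<Rightarrow> nat) set" where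
  "succ y = (if nz y = 0 then insert (minus_ones n y) ((\<lambda>l. vec_add y (e l)) ` {1..n-1})
     else if nz y \<le> n - 2 then (\<lambda>l. vec_add y (e l)) ` {1..n-1}
     else e ` {1..n-1})"

lemma finite_succ: "finite (succ y)"
  by (simp add: succ_def)

lemma k_pos: "0 < k" using n3 nk by linarith

lemma T_nonneg: "0 \<le> T y z"
proof -
  have k: "real n \<le> real k" "3 \<le> real n" using n3 nk by auto
  have "nz y \<le> n - 2 \<Longrightarrow> 0 \<le> real k - (real n - 1 - real (nz y))" using k by linarith
  then show ?thesis using k unfolding transX_def
    by (auto intro!: divide_nonneg_nonneg mult_nonneg_nonneg)
qed

lemma T_supp: "T y z \<noteq> 0 \<Longrightarrow> z \<in> succ y"
  unfolding transX_def succ_def by (auto split: if_splits)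

lemma P_nonneg: "0 \<le> P y zs"
  by (induction zs arbitrary: y) (auto intro: mult_nonneg_nonneg T_nonneg)

lemma FRP_nil: "[] \<notin> FRP"
  by (simp add: first_return_paths_def)

lemma FRP_Cons: "z # zs \<in> FRP \<longleftrightarrow> (zs = [] \<and> inS n z) \<or> (zs \<noteq> [] \<and> \<not> inS n z \<and> zs \<in> FRP)"
  by (cases zs) (auto simp: first_return_paths_def)

lemma inS_iff: assumes "y \<in> states n" shows "inS n y \<longleftrightarrow> nz y = 0"
proof -
  have "nz y = 0 \<longleftrightarrow> {i \<in> {1..n-1}. y i = 0} = {}"
    unfolding num_zeros_def by (simp add: card_eq_0_iff)
  also have "\<dots> \<longleftrightarrow> (\<forall>i\<in>{1..n-1}. 1 \<le> y i)" by force
  finally show ?thesis unfolding inS_def using assms by blast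
qed

lemma P_Cons: "P y (z # zs) = T y z * P z zs" by simp

lemma FRP_ne: "zs \<in> FRP \<Longrightarrow> zs \<noteq> []"
  using FRP_nil by auto

lemma P_hd: "zs \<noteq> [] \<Longrightarrow> P y zs = T y (hd zs) * P (hd zs) (tl zs)"
  by (cases zs) auto

lemma super_fin:
  assumes closed: "\<And>a c. a \<in> Q \<Longrightarrow> c \<in> succ a \<Longrightarrow> T a c \<noteq> 0 \<Longrightarrow> \<not> inS n c \<Longrightarrow> c \<in> Q"
    and gnn: "\<And>c. 0 \<le> g c" and hnn: "\<And>a. a \<in> Q \<Longrightarrow> 0 \<le> h a"
    and sup: "\<And>a. a \<in> Q \<Longrightarrow> (\<Sum>c\<in>succ a. T a c * (if inS n c then g c else h c)) \<le> h a"
  shows "y \<in> Q \<Longrightarrow> finite F \<Longrightarrow> F \<subseteq> FRP \<Longrightarrow> \<forall>zs\<in>F. length zs \<le> N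
      \<Longrightarrow> (\<Sum>zs\<in>F. P y zs * g (last zs)) \<le> h y"
proof (induction N arbitrary: y F)
  case 0
  have "F = {}"
  proof -
    { fix zs assume "zs \<in> F"
      then have "zs = []" "zs \<in> FRP" using 0 by auto
      then have False using FRP_nil by simp }
    then show ?thesis by blast
  qed
  then show ?case using hnn "0.prems"(1) by simp
next
  case (Suc N)
  have y: "y \<in> Q" and F: "finite F" "F \<subseteq> FRP" "\<forall>zs\<in>F. length zs \<le> Suc N"
    using Suc.prems by auto
  define G where "G z = T y z * (if inS n z then g z else h z)" for z
  have Gnn: "0 \<le> G z" if "T y z \<noteq> 0 \<Longrightarrow> \<not> inS n z \<Longrightarrow> z \<in> Q" for z
  proof (cases "T y z = 0")
    case True then show ?thesis by (simp add: G_def)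
  next
    case False
    show ?thesis
    proof (cases "inS n z")
      case True then show ?thesis using T_nonneg[of y z] gnn[of z] by (simp add: G_def)
    next
      case False2: False
      then have "z \<in> Q" using that False by blast
      then show ?thesis using T_nonneg[of y z] hnn[of z] False2 by (simp add: G_def)
    qed
  qed
  have inner: "(\<Sum>zs\<in>{zs\<in>F. hd zs = z}. P y zs * g (last zs)) \<le> G z" if z: "z \<in> hd ` F" for z
  proof (cases "T y z = 0")
    case True
    have "(\<Sum>zs\<in>{zs\<in>F. hd zs = z}. P y zs * g (last zs)) = 0"
    proof (rule sum.neutral, rule ballI)
      fix zs assume zs: "zs \<in> {zs\<in>F. hd zs = z}"
      then have "zs \<noteq> []" using F FRP_ne by blast
      then show "P y zs * g (last zs) = 0" using True zs by (simp add: P_hd)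
    qed
    then show ?thesis unfolding G_def using True by simp
  next
    case Tnz: False
    show ?thesis
    proof (cases "inS n z")
      case True
      have sub: "{zs\<in>F. hd zs = z} \<subseteq> {[z]}"
      proof
        fix zs assume "zs \<in> {zs\<in>F. hd zs = z}"
        then have zs: "zs \<in> FRP" "hd zs = z" using F by auto
        show "zs \<in> {[z]}"
        proof (cases zs)
          case Nil then show ?thesis using zs FRP_nil by simp
        next
          case (Cons a l)
          then show ?thesis using zs True FRP_Cons by auto
        qed
      qed
      have "(\<Sum>zs\<in>{zs\<in>F. hd zs = z}. P y zs * g (last zs)) \<le> (\<Sum>zs\<in>{[z]}. P y zs * g (last zs))"
        by (rule sum_mono2) (use sub in \<open>auto intro!: mult_nonneg_nonneg P_nonneg gnn T_nonneg\<close>)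
      then show ?thesis unfolding G_def using True by simp
    next
      case False
      have zQ: "z \<in> Q" using closed[OF y _ Tnz False] T_supp Tnz by blast
      define Fz where "Fz = tl ` {zs\<in>F. hd zs = z}"
      have form: "\<exists>l. zs = z # l" if "zs \<in> {zs\<in>F. hd zs = z}" for zs
      proof (cases zs)
        case Nil then show ?thesis using that F FRP_nil by auto
      next
        case (Cons a l) then show ?thesis using that by auto
      qed
      have FzFRP: "Fz \<subseteq> FRP"
      proof
        fix zs' assume "zs' \<in> Fz"
        then obtain zs where zs: "zs \<in> {zs\<in>F. hd zs = z}" "zs' = tl zs" unfolding Fz_def by auto
        obtain l where l: "zs = z # l" using form[OF zs(1)] by blast
        have "z # l \<in> FRP" using zs(1) F l by auto
        then show "zs' \<in> FRP" using False FRP_Cons zs(2) l by auto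
      qed
      have Fzlen: "\<forall>zs\<in>Fz. length zs \<le> N" using F unfolding Fz_def by auto
      have Seq: "{zs\<in>F. hd zs = z} = Cons z ` Fz"
      proof
        show "{zs\<in>F. hd zs = z} \<subseteq> Cons z ` Fz"
        proof
          fix zs assume zs: "zs \<in> {zs\<in>F. hd zs = z}"
          obtain l where l: "zs = z # l" using form[OF zs] by blast
          have "l \<in> Fz" unfolding Fz_def using zs l by force
          then show "zs \<in> Cons z ` Fz" using l by blast
        qed
        show "Cons z ` Fz \<subseteq> {zs\<in>F. hd zs = z}"
        proof
          fix zs assume "zs \<in> Cons z ` Fz"
          then obtain zs0 where zs0: "zs0 \<in> {zs\<in>F. hd zs = z}" "zs = z # tl zs0"
            unfolding Fz_def by blast
          obtain l where l: "zs0 = z # l" using form[OF zs0(1)] by blast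
          have "zs = zs0" using zs0(2) l by simp
          then show "zs \<in> {zs\<in>F. hd zs = z}" using zs0(1) by simp
        qed
      qed
      have "(\<Sum>zs\<in>{zs\<in>F. hd zs = z}. P y zs * g (last zs))
          = (\<Sum>zs'\<in>Fz. P y (z # zs') * g (last (z # zs')))"
        unfolding Seq by (subst sum.reindex) auto
      also have "\<dots> = (\<Sum>zs'\<in>Fz. T y z * (P z zs' * g (last zs')))"
      proof (rule sum.cong[OF refl])
        fix zs' assume "zs' \<in> Fz"
        then have "zs' \<noteq> []" using FzFRP FRP_ne by blast
        then show "P y (z # zs') * g (last (z # zs')) = T y z * (P z zs' * g (last zs'))" by simp
      qed
      also have "\<dots> = T y z * (\<Sum>zs'\<in>Fz. P z zs' * g (last zs'))" by (simp add: sum_distrib_left)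
      also have "\<dots> \<le> T y z * h z"
      proof (rule mult_left_mono[OF _ T_nonneg])
        show "(\<Sum>zs'\<in>Fz. P z zs' * g (last zs')) \<le> h z"
          using Suc.IH[OF zQ _ FzFRP Fzlen] F(1) unfolding Fz_def by simp
      qed
      finally show ?thesis unfolding G_def using False by simp
    qed
  qed
  have "(\<Sum>zs\<in>F. P y zs * g (last zs)) = (\<Sum>z\<in>hd ` F. \<Sum>zs\<in>{zs\<in>F. hd zs = z}. P y zs * g (last zs))"
    by (rule sum.image_gen[OF F(1)])
  also have "\<dots> \<le> (\<Sum>z\<in>hd ` F. G z)" by (rule sum_mono) (rule inner)
  also have "\<dots> = (\<Sum>z\<in>hd ` F \<inter> succ y. G z)"
  proof (rule sum.mono_neutral_right)
    show "finite (hd ` F)" using F(1) by blast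
    show "hd ` F \<inter> succ y \<subseteq> hd ` F" by blast
    show "\<forall>i\<in>hd ` F - hd ` F \<inter> succ y. G i = 0"
    proof
      fix z assume "z \<in> hd ` F - hd ` F \<inter> succ y"
      then have "z \<notin> succ y" by blast
      then have "T y z = 0" using T_supp by blast
      then show "G z = 0" unfolding G_def by simp
    qed
  qed
  also have "\<dots> \<le> (\<Sum>z\<in>succ y. G z)"
  proof (rule sum_mono2[OF finite_succ])
    show "hd ` F \<inter> succ y \<subseteq> succ y" by blast
    fix z assume "z \<in> succ y - hd ` F \<inter> succ y"
    then have zs: "z \<in> succ y" by blast
    show "0 \<le> G z" using closed[OF y zs] by (intro Gnn) blast
  qed
  also have "\<dots> \<le> h y" unfolding G_def by (rule sup[OF y])
  finally show ?case .
qed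

lemma super:
  assumes closed: "\<And>y z. y \<in> Q \<Longrightarrow> z \<in> succ y \<Longrightarrow> T y z \<noteq> 0 \<Longrightarrow> \<not> inS n z \<Longrightarrow> z \<in> Q"
    and gnn: "\<And>z. 0 \<le> g z" and hnn: "\<And>y. y \<in> Q \<Longrightarrow> 0 \<le> h y"
    and sup: "\<And>y. y \<in> Q \<Longrightarrow> (\<Sum>z\<in>succ y. T y z * (if inS n z then g z else h z)) \<le> h y"
    and y: "y \<in> Q"
  shows "(\<lambda>zs. P y zs * g (last zs)) summable_on FRP" "Ex y g \<le> h y"
proof -
  have fin: "(\<Sum>zs\<in>F. P y zs * g (last zs)) \<le> h y" if "finite F" "F \<subseteq> FRP" for F
  proof -
    have len: "\<forall>zs\<in>F. length zs \<le> Max (length ` F)" using that(1) by simp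
    note R = super_fin[where Q=Q and g=g and h=h, OF closed gnn hnn sup y that(1) that(2) len]
    show ?thesis by (rule R)
  qed
  show sm: "(\<lambda>zs. P y zs * g (last zs)) summable_on FRP"
    by (rule nonneg_bdd_above_summable_on)
       (auto intro!: mult_nonneg_nonneg P_nonneg gnn bdd_aboveI2 fin)
  show "Ex y g \<le> h y" unfolding Ex_def
    by (rule infsum_le_finite_sums[OF sm fin])
qed

end
context ch begin
lemma has_sum_single: "(f has_sum f a) {a}"
  using has_sum_finite[of "{a}" f] by simp

lemma hs_cong:
  assumes "\<And>x. x \<in> A \<Longrightarrow> f x = g x" "(g has_sum s) A"
  shows "(f has_sum s) A"
proof -
  have "(f has_sum s) A \<longleftrightarrow> (g has_sum s) A" by (rule has_sum_cong) (rule assms(1))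
  then show ?thesis using assms(2) by simp
qed

lemma dec:
  assumes sm: "\<And>z. z \<in> succ y \<Longrightarrow> T y z \<noteq> 0 \<Longrightarrow> \<not> inS n z \<Longrightarrow> (\<lambda>zs. P z zs * g (last zs)) summable_on FRP"
  shows "((\<lambda>zs. P y zs * g (last zs)) has_sum (\<Sum>z\<in>succ y. T y z * (if inS n z then g z else Ex z g))) FRP"
proof -
  define f where "f zs = P y zs * g (last zs)" for zs
  define B where "B z = {zs \<in> FRP. hd zs = z}" for z
  have each: "(f has_sum (T y z * (if inS n z then g z else Ex z g))) (B z)" if z: "z \<in> succ y" for z
  proof (cases "inS n z")
    case True
    have "B z = {[z]}"
    proof
      show "B z \<subseteq> {[z]}"
      proof
        fix zs assume "zs \<in> B z"
        then have zs: "zs \<in> FRP" "hd zs = z" unfolding B_def by auto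
        show "zs \<in> {[z]}"
        proof (cases zs)
          case Nil then show ?thesis using zs FRP_nil by simp
        next
          case (Cons a l) then show ?thesis using zs True FRP_Cons[of a l] by auto
        qed
      qed
      show "{[z]} \<subseteq> B z" using True FRP_Cons[of z "[]"] unfolding B_def by auto
    qed
    then show ?thesis using True has_sum_single[of f "[z]"] unfolding f_def by simp
  next
    case False
    have Bz: "B z = Cons z ` FRP"
    proof
      show "B z \<subseteq> Cons z ` FRP"
      proof
        fix zs assume "zs \<in> B z"
        then have zs: "zs \<in> FRP" "hd zs = z" unfolding B_def by auto
        show "zs \<in> Cons z ` FRP"
        proof (cases zs)
          case Nil then show ?thesis using zs FRP_nil by simp
        next
          case (Cons a l)
          then have "l \<in> FRP" using zs False FRP_Cons[of a l] by auto
          then show ?thesis using Cons zs by auto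
        qed
      qed
      show "Cons z ` FRP \<subseteq> B z"
      proof
        fix zs assume "zs \<in> Cons z ` FRP"
        then obtain l where l: "l \<in> FRP" "zs = z # l" by blast
        have "l \<noteq> []" using l FRP_ne by blast
        then have "z # l \<in> FRP" using FRP_Cons[of z l] l(1) False by blast
        then show "zs \<in> B z" unfolding B_def using l by simp
      qed
    qed
    have eq: "f (z # zs') = T y z * (P z zs' * g (last zs'))" if "zs' \<in> FRP" for zs'
      using that FRP_nil unfolding f_def by (cases zs') auto
    have "((\<lambda>zs'. f (z # zs')) has_sum (T y z * Ex z g)) FRP"
    proof (cases "T y z = 0")
      case True
      have "((\<lambda>zs'. f (z # zs')) has_sum 0) FRP"
      proof (rule hs_cong[where g="\<lambda>_. 0"])
        show "f (z # x) = 0" if "x \<in> FRP" for x using eq[OF that] True by simp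
      qed simp
      then show ?thesis using True by simp
    next
      case Tnz: False
      have "((\<lambda>zs'. P z zs' * g (last zs')) has_sum Ex z g) FRP"
        unfolding Ex_def using sm[OF z Tnz False] by (rule has_sum_infsum)
      then have h2: "((\<lambda>zs'. T y z * (P z zs' * g (last zs'))) has_sum (T y z * Ex z g)) FRP"
        by (rule has_sum_cmult_right)
      show ?thesis by (rule hs_cong[OF _ h2]) (rule eq)
    qed
    then have "((f \<circ> Cons z) has_sum (T y z * Ex z g)) FRP" by (simp add: o_def)
    moreover have inj: "inj_on (Cons z) FRP" by (simp add: inj_on_def)
    ultimately show ?thesis unfolding Bz using False by (simp add: has_sum_reindex[OF inj])
  qed
  have U: "(f has_sum (\<Sum>z\<in>succ y. T y z * (if inS n z then g z else Ex z g))) (\<Union>z\<in>succ y. B z)"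
    by (rule sum_has_sum[OF finite_succ each]) (auto simp: B_def)
  have "(f has_sum (\<Sum>z\<in>succ y. T y z * (if inS n z then g z else Ex z g))) FRP"
  proof (subst has_sum_cong_neutral[where g = f and T = "\<Union>z\<in>succ y. B z"])
    fix zs assume zs: "zs \<in> FRP - (\<Union>z\<in>succ y. B z)"
    then have "hd zs \<notin> succ y" unfolding B_def by auto
    then have "T y (hd zs) = 0" using T_supp by blast
    moreover have "zs \<noteq> []" using zs FRP_ne by blast
    ultimately show "f zs = 0" unfolding f_def by (simp add: P_hd)
  qed (use U in \<open>auto simp: B_def\<close>)
  then show ?thesis unfolding f_def .
qed

lemma dec_Ex:
  assumes "\<And>z. z \<in> succ y \<Longrightarrow> T y z \<noteq> 0 \<Longrightarrow> \<not> inS n z \<Longrightarrow> (\<lambda>zs. P z zs * g (last zs)) summable_on FRP"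
  shows "Ex y g = (\<Sum>z\<in>succ y. T y z * (if inS n z then g z else Ex z g))"
  using dec[OF assms] unfolding Ex_def by (rule infsumI)

lemma uni_ind:
  assumes closed: "\<And>a c. a \<in> Q \<Longrightarrow> c \<in> succ a \<Longrightarrow> T a c \<noteq> 0 \<Longrightarrow> \<not> inS n c \<Longrightarrow> c \<in> Q"
    and psi: "\<And>a. a \<in> Q \<Longrightarrow> (\<Sum>c\<in>succ a. T a c * (if inS n c then 0 else \<psi> c)) \<le> \<rho> * \<psi> a"
    and rho: "0 \<le> \<rho>" and C: "0 \<le> C"
    and u: "\<And>a. a \<in> Q \<Longrightarrow> u a = (\<Sum>c\<in>succ a. T a c * (if inS n c then 0 else u c))"
    and bd: "\<And>a. a \<in> Q \<Longrightarrow> \<bar>u a\<bar> \<le> C * \<psi> a"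
  shows "y \<in> Q \<Longrightarrow> \<bar>u y\<bar> \<le> C * \<rho>^N * \<psi> y"
proof (induction N arbitrary: y)
  case 0 then show ?case using bd by simp
next
  case (Suc N)
  have y: "y \<in> Q" by (rule Suc.prems)
  have "\<bar>u y\<bar> = \<bar>\<Sum>z\<in>succ y. T y z * (if inS n z then 0 else u z)\<bar>" using u[OF y] by simp
  also have "\<dots> \<le> (\<Sum>z\<in>succ y. \<bar>T y z * (if inS n z then 0 else u z)\<bar>)" by (rule sum_abs)
  also have "\<dots> \<le> (\<Sum>z\<in>succ y. T y z * (if inS n z then 0 else C * \<rho>^N * \<psi> z))"
  proof (rule sum_mono)
    fix z assume z: "z \<in> succ y"
    show "\<bar>T y z * (if inS n z then 0 else u z)\<bar> \<le> T y z * (if inS n z then 0 else C * \<rho>^N * \<psi> z)"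
    proof (cases "T y z = 0 \<or> inS n z")
      case True then show ?thesis by auto
    next
      case False
      then have "z \<in> Q" using closed[OF y z] by blast
      then have "\<bar>u z\<bar> \<le> C * \<rho>^N * \<psi> z" by (rule Suc.IH)
      then have "T y z * \<bar>u z\<bar> \<le> T y z * (C * \<rho>^N * \<psi> z)" by (rule mult_left_mono[OF _ T_nonneg])
      then show ?thesis using False T_nonneg[of y z] by (simp add: abs_mult)
    qed
  qed
  also have "\<dots> = (\<Sum>z\<in>succ y. C * \<rho>^N * (T y z * (if inS n z then 0 else \<psi> z)))"
    by (rule sum.cong) auto
  also have "\<dots> = C * \<rho>^N * (\<Sum>z\<in>succ y. T y z * (if inS n z then 0 else \<psi> z))"
    by (simp add: sum_distrib_left)
  also have "\<dots> \<le> C * \<rho>^N * (\<rho> * \<psi> y)" by (intro mult_left_mono psi[OF y]) (use C rho in auto)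
  finally show ?case by (simp add: algebra_simps)
qed

lemma uni:
  assumes closed: "\<And>a c. a \<in> Q \<Longrightarrow> c \<in> succ a \<Longrightarrow> T a c \<noteq> 0 \<Longrightarrow> \<not> inS n c \<Longrightarrow> c \<in> Q"
    and psi: "\<And>a. a \<in> Q \<Longrightarrow> (\<Sum>c\<in>succ a. T a c * (if inS n c then 0 else \<psi> c)) \<le> \<rho> * \<psi> a"
    and rho: "0 \<le> \<rho>" "\<rho> < 1" and C: "0 \<le> C"
    and u: "\<And>a. a \<in> Q \<Longrightarrow> u a = (\<Sum>c\<in>succ a. T a c * (if inS n c then 0 else u c))"
    and bd: "\<And>a. a \<in> Q \<Longrightarrow> \<bar>u a\<bar> \<le> C * \<psi> a"
    and y: "y \<in> Q"
  shows "u y = 0"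
proof -
  have ind1: "\<bar>u y\<bar> \<le> C * \<rho>^N * \<psi> y" for N
    using closed psi rho(1) C u bd y by (rule uni_ind[where Q=Q and \<psi>=\<psi> and \<rho>=\<rho> and C=C and u=u])
  have ind: "\<forall>N. \<bar>u y\<bar> \<le> C * \<rho>^N * \<psi> y" using ind1 by blast
  have lim: "(\<lambda>N. C * \<rho>^N * \<psi> y) \<longlonglongrightarrow> 0"
  proof -
    have "(\<lambda>N. \<rho>^N) \<longlonglongrightarrow> 0" by (rule LIMSEQ_power_zero) (use rho in simp)
    then have "(\<lambda>N. C * \<rho>^N) \<longlonglongrightarrow> 0" by (rule tendsto_mult_right_zero[where c=C, simplified mult.commute])
    then show ?thesis by (rule tendsto_mult_left_zero)
  qed
  have "\<bar>u y\<bar> \<le> 0" by (rule LIMSEQ_le_const[OF lim]) (use ind in blast)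
  then show ?thesis by simp
qed

end
context ch begin

definition Q0 :: "(nat \<Rightarrow> nat) set" where
  "Q0 = {y. y \<in> states n \<and> \<not> inS n y \<and> nz y \<le> n - 2}"

definition Ts :: "(nat \<Rightarrow> nat) \<Rightarrow> real" where
  "Ts w = (\<Sum>i=1..n-1. real (w i))"

definition Zs :: "(nat \<Rightarrow> nat) \<Rightarrow> nat set" where
  "Zs y = {l \<in> {1..n-1}. y l = 0}"

definition NZs :: "(nat \<Rightarrow> nat) \<Rightarrow> nat set" where
  "NZs y = {l \<in> {1..n-1}. y l \<noteq> 0}"

abbreviation vadd :: "(nat \<Rightarrow> nat) \<Rightarrow> nat \<Rightarrow> nat \<Rightarrow> nat" where
  "vadd y l \<equiv> vec_add y (unit_vec l)"

lemma vadd_apply: "vadd y l i = y i + (if i = l then 1 else 0)"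
  by (simp add: vec_add_def unit_vec_def)

lemma vadd_states: "y \<in> states n \<Longrightarrow> l \<in> {1..n-1} \<Longrightarrow> vadd y l \<in> states n"
  by (auto simp: states_def vadd_apply)

lemma vadd_inj: "inj_on (vadd y) {1..n-1}"
proof (rule inj_onI)
  fix a c assume "vadd y a = vadd y c"
  then have "vadd y a a = vadd y c a" by simp
  then show "a = c" by (simp add: vadd_apply split: if_splits)
qed

lemma nz_Zs: "nz y = card (Zs y)"
  by (simp add: num_zeros_def Zs_def)

lemma card_NZs: "card (NZs y) = n - 1 - nz y"
proof -
  have "Zs y \<union> NZs y = {1..n-1}" "Zs y \<inter> NZs y = {}" by (auto simp: Zs_def NZs_def)
  moreover have "finite (Zs y)" "finite (NZs y)" by (auto simp: Zs_def NZs_def)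
  ultimately have "card (Zs y) + card (NZs y) = n - 1"
    by (metis card_Un_disjoint card_atLeastAtMost diff_Suc_1)
  then show ?thesis by (simp add: nz_Zs)
qed

lemma nz_vadd:
  assumes "l \<in> {1..n-1}"
  shows "nz (vadd y l) = (if y l = 0 then nz y - 1 else nz y)"
proof -
  have eq: "Zs (vadd y l) = Zs y - {l}"
    by (auto simp: Zs_def vadd_apply)
  show ?thesis
  proof (cases "y l = 0")
    case True
    then have "l \<in> Zs y" using assms by (simp add: Zs_def)
    moreover have "finite (Zs y)" by (simp add: Zs_def)
    ultimately show ?thesis using True by (simp add: nz_Zs eq card_Diff_singleton_if)
  next
    case False
    then have "Zs y - {l} = Zs y" by (auto simp: Zs_def)
    then show ?thesis using False by (simp add: nz_Zs eq)
  qed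
qed

lemma Q0_D:
  assumes "y \<in> Q0"
  shows "y \<in> states n" "\<not> inS n y" "nz y \<le> n - 2" "1 \<le> nz y"
proof -
  show "y \<in> states n" "\<not> inS n y" "nz y \<le> n - 2" using assms by (auto simp: Q0_def)
  then show "1 \<le> nz y" using inS_iff by fastforce
qed

lemma succ_Q0: "y \<in> Q0 \<Longrightarrow> succ y = vadd y ` {1..n-1}"
  using Q0_D[of y] by (simp add: succ_def)

lemma T_step:
  assumes y: "y \<in> Q0" and l: "l \<in> {1..n-1}"
  shows "T y (vadd y l) = (if y l = 0 then (real k - real n + 1 + real (nz y)) / (real k * real (nz y)) else 1 / real k)"
proof -
  note D = Q0_D[OF y]
  have the: "(THE l'. l' \<in> {1..n-1} \<and> vadd y l = vadd y l') = l"
  proof (rule the_equality)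
    show "l \<in> {1..n-1} \<and> vadd y l = vadd y l" using l by simp
    fix l' assume "l' \<in> {1..n-1} \<and> vadd y l = vadd y l'"
    then show "l' = l" using vadd_inj[of y] l unfolding inj_on_def by blast
  qed
  have ex: "\<exists>l'\<in>{1..n-1}. vadd y l = vadd y l'" using l by blast
  have nz0: "nz y \<noteq> 0" using D by simp
  have "real k - (real n - 1 - real (nz y)) = real k - real n + 1 + real (nz y)" by simp
  then show ?thesis unfolding transX_def using D(1) D(3) nz0 the ex by simp
qed

lemma inS_vadd:
  assumes y: "y \<in> Q0" and l: "l \<in> {1..n-1}"
  shows "inS n (vadd y l) \<longleftrightarrow> (nz y = 1 \<and> y l = 0)"
proof -
  note D = Q0_D[OF y]
  have "inS n (vadd y l) \<longleftrightarrow> nz (vadd y l) = 0" by (rule inS_iff[OF vadd_states[OF D(1) l]])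
  then show ?thesis using nz_vadd[OF l, of y] D(4) by auto
qed

lemma Ts_vadd:
  assumes l: "l \<in> {1..n-1}"
  shows "Ts (vadd y l) = Ts y + 1"
proof -
  have "Ts (vadd y l) = (\<Sum>i=1..n-1. real (y i) + (if i = l then 1 else 0))"
    unfolding Ts_def vadd_apply by (intro sum.cong) auto
  also have "\<dots> = Ts y + (\<Sum>i=1..n-1. (if i = l then 1 else 0))"
    unfolding Ts_def by (simp add: sum.distrib)
  also have "(\<Sum>i=1..n-1. (if i = l then 1 else 0::real)) = 1" using l by simp
  finally show ?thesis .
qed

lemma avg:
  assumes y: "y \<in> Q0"
  shows "(\<Sum>z\<in>succ y. T y z * F z)
    = (real k - real n + 1 + real (nz y)) / (real k * real (nz y)) * (\<Sum>l\<in>Zs y. F (vadd y l))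
      + 1 / real k * (\<Sum>l\<in>NZs y. F (vadd y l))"
proof -
  define c where "c = (real k - real n + 1 + real (nz y)) / (real k * real (nz y))"
  have "(\<Sum>z\<in>succ y. T y z * F z) = (\<Sum>l\<in>{1..n-1}. T y (vadd y l) * F (vadd y l))"
    unfolding succ_Q0[OF y] by (subst sum.reindex[OF vadd_inj]) simp
  also have "\<dots> = (\<Sum>l\<in>{1..n-1}. if y l = 0 then c * F (vadd y l) else 1 / real k * F (vadd y l))"
    by (rule sum.cong[OF refl]) (simp add: T_step[OF y] c_def)
  also have "\<dots> = (\<Sum>l\<in>Zs y. c * F (vadd y l)) + (\<Sum>l\<in>NZs y. 1 / real k * F (vadd y l))"
  proof -
    have "{1..n-1} \<inter> {l. y l = 0} = Zs y" "{1..n-1} \<inter> - {l. y l = 0} = NZs y"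
      by (auto simp: Zs_def NZs_def)
    then show ?thesis by (simp add: sum.If_cases)
  qed
  finally show ?thesis by (simp add: c_def sum_distrib_left)
qed

lemma avg_const:
  assumes y: "y \<in> Q0"
    and A: "\<And>l. l \<in> Zs y \<Longrightarrow> F (vadd y l) = A" and B: "\<And>l. l \<in> NZs y \<Longrightarrow> F (vadd y l) = B"
  shows "(\<Sum>z\<in>succ y. T y z * F z)
    = (real k - real n + 1 + real (nz y)) / real k * A + (real n - 1 - real (nz y)) / real k * B"
proof -
  note D = Q0_D[OF y]
  have S1: "(\<Sum>l\<in>Zs y. F (vadd y l)) = real (nz y) * A" using A by (simp add: nz_Zs)
  have S2: "(\<Sum>l\<in>NZs y. F (vadd y l)) = (real n - 1 - real (nz y)) * B"
  proof -
    have "(\<Sum>l\<in>NZs y. F (vadd y l)) = real (card (NZs y)) * B" using B by simp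
    moreover have "real (card (NZs y)) = real n - 1 - real (nz y)"
      using D(3) n3 by (simp add: card_NZs of_nat_diff)
    ultimately show ?thesis by simp
  qed
  have pos: "real (nz y) > 0" using D(4) by simp
  show ?thesis unfolding avg[OF y] S1 S2 using pos k_pos by (simp add: field_simps)
qed

end
context ch begin

lemma sum_T_one: assumes y: "y \<in> Q0" shows "(\<Sum>z\<in>succ y. T y z) = 1"
proof -
  have "(\<Sum>z\<in>succ y. T y z * 1) = (real k - real n + 1 + real (nz y)) / real k * 1 + (real n - 1 - real (nz y)) / real k * 1"
    by (rule avg_const[OF y]) auto
  then show ?thesis using k_pos by (simp add: field_simps)
qed

lemma sum_phi:
  assumes y: "y \<in> Q0"
  shows "(\<Sum>z\<in>succ y. T y z * \<phi> (Ts z) (nz z))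
    = (real k - real n + 1 + real (nz y)) / real k * \<phi> (Ts y + 1) (nz y - 1)
      + (real n - 1 - real (nz y)) / real k * \<phi> (Ts y + 1) (nz y)"
proof (rule avg_const[OF y])
  fix l assume "l \<in> Zs y"
  then have l: "l \<in> {1..n-1}" "y l = 0" by (auto simp: Zs_def)
  show "\<phi> (Ts (vadd y l)) (nz (vadd y l)) = \<phi> (Ts y + 1) (nz y - 1)"
    using l by (simp add: Ts_vadd nz_vadd)
next
  fix l assume "l \<in> NZs y"
  then have l: "l \<in> {1..n-1}" "y l \<noteq> 0" by (auto simp: NZs_def)
  show "\<phi> (Ts (vadd y l)) (nz (vadd y l)) = \<phi> (Ts y + 1) (nz y)"
    using l by (simp add: Ts_vadd nz_vadd)
qed

lemma succ_Q0_D: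
  assumes y: "y \<in> Q0" and z: "z \<in> succ y"
  obtains l where "l \<in> {1..n-1}" "z = vadd y l"
  using z unfolding succ_Q0[OF y] by blast

lemma succ_states: "y \<in> Q0 \<Longrightarrow> z \<in> succ y \<Longrightarrow> z \<in> states n"
  by (metis Q0_D(1) succ_Q0_D vadd_states)

lemma closed_Q0:
  assumes y: "y \<in> Q0" and z: "z \<in> succ y" and nS: "\<not> inS n z"
  shows "z \<in> Q0"
proof -
  obtain l where l: "l \<in> {1..n-1}" "z = vadd y l" using succ_Q0_D[OF y z] by blast
  have "nz z \<le> nz y" using l by (simp add: nz_vadd)
  then show ?thesis using Q0_D[OF y] succ_states[OF y z] nS unfolding Q0_def by auto
qed

lemma Ts_nonneg: "0 \<le> Ts y"
  unfolding Ts_def by (rule sum_nonneg) simp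

definition g0 :: "(nat \<Rightarrow> nat) \<Rightarrow> real" where "g0 z = Ts z ^ 2 + 1"
definition h0f :: "real \<Rightarrow> nat \<Rightarrow> real" where
  "h0f t m = (t + real k * real m)^2 + (real k)^2 * real m + 1"
definition h0 :: "(nat \<Rightarrow> nat) \<Rightarrow> real" where "h0 z = h0f (Ts z) (nz z)"

lemma ineq1:
  fixes u r s K m :: real
  assumes "0 \<le> u" "2 \<le> r" "r + s = K" "0 < K"
  shows "r / K * ((u + 1 - K)^2 + K^2 * m - K^2 + 1) + s / K * ((u + 1)^2 + K^2 * m + 1)
    \<le> u^2 + K^2 * m + 1"
proof -
  define X where "X = (u + 1 - K)^2 + K^2 * m - K^2 + 1"
  define Y where "Y = (u + 1)^2 + K^2 * m + 1"
  define Z where "Z = u^2 + K^2 * m + 1"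
  have s: "s = K - r" using assms by simp
  have "r * X + s * Y = K * Y - 2 * r * K * (u + 1)"
    unfolding s X_def Y_def by (simp add: power2_eq_square algebra_simps)
  also have "\<dots> \<le> K * Z"
  proof -
    have "2 * u + 1 \<le> 4 * u + 4" using assms by linarith
    also have "\<dots> = 4 * (u + 1)" by simp
    also have "\<dots> \<le> (2 * r) * (u + 1)" using assms by (intro mult_right_mono) auto
    finally have "2 * u + 1 \<le> 2 * r * (u + 1)" .
    then have "K * (2 * u + 1) \<le> K * (2 * r * (u + 1))" using assms by (intro mult_left_mono) auto
    then show ?thesis unfolding Y_def Z_def by (simp add: power2_eq_square algebra_simps)
  qed
  finally have fin: "r * X + s * Y \<le> K * Z" .
  have "r / K * X + s / K * Y = (r * X + s * Y) / K" by (simp add: add_divide_distrib)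
  also have "\<dots> \<le> (K * Z) / K" by (rule divide_right_mono[OF fin]) (use assms in simp)
  also have "\<dots> = Z" using assms by simp
  finally show ?thesis unfolding X_def Y_def Z_def .
qed

lemma h0_super:
  assumes y: "y \<in> Q0"
  shows "(\<Sum>z\<in>succ y. T y z * (if inS n z then g0 z else h0 z)) \<le> h0 y"
proof -
  note D = Q0_D[OF y]
  have "(\<Sum>z\<in>succ y. T y z * (if inS n z then g0 z else h0 z)) = (\<Sum>z\<in>succ y. T y z * h0f (Ts z) (nz z))"
  proof (rule sum.cong[OF refl])
    fix z assume z: "z \<in> succ y"
    have "inS n z \<Longrightarrow> nz z = 0" using inS_iff[OF succ_states[OF y z]] by simp
    then show "T y z * (if inS n z then g0 z else h0 z) = T y z * h0f (Ts z) (nz z)"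
      by (auto simp: g0_def h0_def h0f_def)
  qed
  also have "\<dots> = (real k - real n + 1 + real (nz y)) / real k * h0f (Ts y + 1) (nz y - 1)
      + (real n - 1 - real (nz y)) / real k * h0f (Ts y + 1) (nz y)"
    by (rule sum_phi[OF y])
  also have "\<dots> \<le> h0 y"
  proof -
    define u where "u = Ts y + real k * real (nz y)"
    have u0: "0 \<le> u" unfolding u_def using Ts_nonneg by simp
    have m1: "real (nz y - 1) = real (nz y) - 1" using D(4) by simp
    have A: "h0f (Ts y + 1) (nz y - 1) = (u + 1 - real k)^2 + (real k)^2 * real (nz y) - (real k)^2 + 1"
      unfolding h0f_def m1 u_def by (simp add: algebra_simps power2_eq_square)
    have B: "h0f (Ts y + 1) (nz y) = (u + 1)^2 + (real k)^2 * real (nz y) + 1"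
      unfolding h0f_def u_def by (simp add: algebra_simps power2_eq_square)
    have C: "h0 y = u^2 + (real k)^2 * real (nz y) + 1" unfolding h0_def h0f_def u_def by simp
    have r2: "2 \<le> real k - real n + 1 + real (nz y)" using D(4) nk by simp
    show ?thesis unfolding A B C
      by (rule ineq1[OF u0 r2]) (use k_pos in auto)
  qed
  finally show ?thesis .
qed

lemma g0_nonneg: "0 \<le> g0 z" unfolding g0_def by simp
lemma h0_nonneg: "0 \<le> h0 z" unfolding h0_def h0f_def by simp

lemma super0:
  assumes y: "y \<in> Q0"
  shows "(\<lambda>zs. P y zs * g0 (last zs)) summable_on FRP" "Ex y g0 \<le> h0 y"
proof -
  have cl: "\<And>a c. a \<in> Q0 \<Longrightarrow> c \<in> succ a \<Longrightarrow> T a c \<noteq> 0 \<Longrightarrow> \<not> inS n c \<Longrightarrow> c \<in> Q0"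
    using closed_Q0 by blast
  show "(\<lambda>zs. P y zs * g0 (last zs)) summable_on FRP"
    using cl g0_nonneg h0_nonneg h0_super y by (rule super(1))
  show "Ex y g0 \<le> h0 y"
    using cl g0_nonneg h0_nonneg h0_super y by (rule super(2))
qed

lemma summ:
  assumes gb: "\<And>z. \<bar>g z\<bar> \<le> A * g0 z" and y: "y \<in> Q0"
  shows "(\<lambda>zs. P y zs * g (last zs)) summable_on FRP" "\<bar>Ex y g\<bar> \<le> A * h0 y"
proof -
  have A0: "0 \<le> A"
  proof -
    have "0 \<le> A * g0 y" using gb[of y] by linarith
    moreover have "0 < g0 y" unfolding g0_def using zero_le_power2[of "Ts y"] by linarith
    ultimately show ?thesis by (simp add: zero_le_mult_iff)
  qed
  have s0: "(\<lambda>zs. A * (P y zs * g0 (last zs))) summable_on FRP"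
    by (rule summable_on_cmult_right) (rule super0(1)[OF y])
  have nb: "norm (P y zs * g (last zs)) \<le> A * (P y zs * g0 (last zs))" for zs
  proof -
    have "norm (P y zs * g (last zs)) = P y zs * \<bar>g (last zs)\<bar>" using P_nonneg by (simp add: abs_mult)
    also have "\<dots> \<le> P y zs * (A * g0 (last zs))" by (rule mult_left_mono[OF gb P_nonneg])
    finally show ?thesis by (simp add: algebra_simps)
  qed
  have "(\<lambda>zs. norm (P y zs * g (last zs))) summable_on FRP"
  proof (rule summable_on_comparison_test[OF s0])
    fix zs show "norm (P y zs * g (last zs)) \<le> A * (P y zs * g0 (last zs))" by (rule nb)
  qed simp
  then show sm: "(\<lambda>zs. P y zs * g (last zs)) summable_on FRP" by (rule abs_summable_summable)
  have h1: "((\<lambda>zs. P y zs * g (last zs)) has_sum Ex y g) FRP"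
    unfolding Ex_def using sm by (rule has_sum_infsum)
  have h2: "((\<lambda>zs. A * (P y zs * g0 (last zs))) has_sum (A * Ex y g0)) FRP"
    unfolding Ex_def using s0 super0(1)[OF y] by (intro has_sum_cmult_right has_sum_infsum)
  have "norm (Ex y g) \<le> A * Ex y g0" by (rule norm_infsum_le[OF h1 h2]) (rule nb)
  also have "\<dots> \<le> A * h0 y" by (rule mult_left_mono[OF super0(2)[OF y] A0])
  finally show "\<bar>Ex y g\<bar> \<le> A * h0 y" by simp
qed

end
context ch begin

definition psi :: "(nat \<Rightarrow> nat) \<Rightarrow> real" where
  "psi z = (real k) ^ (nz z) * (Ts z + 2 * real k)^2"

definition rho :: real where
  "rho = (real k - 1) / real k * ((2 * real k + 1) / (2 * real k))^2"

lemma K_ge: "3 \<le> real k" using n3 nk by simp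

lemma rho_bounds: "0 \<le> rho" "rho < 1"
proof -
  define K where "K = real k"
  have K3: "3 \<le> K" using K_ge unfolding K_def .
  show "0 \<le> rho" unfolding rho_def using K_ge by simp
  have "rho = (K - 1) * (2 * K + 1)^2 / (4 * K^3)"
    unfolding rho_def K_def[symmetric] using K3 by (simp add: field_simps power2_eq_square power3_eq_cube)
  also have "\<dots> < 1"
  proof -
    have "(K - 1) * (2 * K + 1)^2 = 4 * K^3 - 3 * K - 1"
      by (simp add: power2_eq_square power3_eq_cube algebra_simps)
    also have "\<dots> < 4 * K^3" using K3 by simp
    finally show ?thesis using K3 by simp
  qed
  finally show "rho < 1" .
qed

lemma psi_nonneg: "0 \<le> psi z" unfolding psi_def by simp

lemma psi_ge: "(Ts z + 2 * real k)^2 \<le> psi z"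
proof -
  have "1 \<le> (real k) ^ (nz z)" using K_ge by (intro one_le_power) simp
  then show ?thesis unfolding psi_def
    using mult_right_mono[of 1 "(real k) ^ (nz z)" "(Ts z + 2 * real k)^2"] by simp
qed

lemma psi_cond:
  assumes y: "y \<in> Q0"
  shows "(\<Sum>z\<in>succ y. T y z * (if inS n z then 0 else psi z)) \<le> rho * psi y"
proof -
  note D = Q0_D[OF y]
  define K where "K = real k"
  define t where "t = Ts y"
  define m where "m = nz y"
  define \<phi> where "\<phi> s i = (if i = 0 then 0 else K ^ i * (s + 2 * K)^2)" for s i
  define p where "p = K ^ (m - 1)"
  define W0 where "W0 = (t + 1 + 2 * K)^2"
  define r where "r = K - real n + 1 + real m"
  define s where "s = real n - 1 - real m"
  have K3: "3 \<le> K" using K_ge unfolding K_def .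
  have m1: "1 \<le> m" "m \<le> n - 2" using D unfolding m_def by auto
  have p0: "0 < p" unfolding p_def using K3 by simp
  have W0nn: "0 \<le> W0" unfolding W0_def by simp
  have t0: "0 \<le> t" unfolding t_def by (rule Ts_nonneg)
  have r2: "2 \<le> r" unfolding r_def K_def using m1 nk by simp
  have s0: "0 \<le> s" unfolding s_def using m1 n3 by simp
  have rs: "r + s = K" unfolding r_def s_def by simp
  have "(\<Sum>z\<in>succ y. T y z * (if inS n z then 0 else psi z)) = (\<Sum>z\<in>succ y. T y z * \<phi> (Ts z) (nz z))"
  proof (rule sum.cong[OF refl])
    fix z assume z: "z \<in> succ y"
    have "inS n z \<longleftrightarrow> nz z = 0" using inS_iff[OF succ_states[OF y z]] .
    then show "T y z * (if inS n z then 0 else psi z) = T y z * \<phi> (Ts z) (nz z)"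
      by (simp add: \<phi>_def psi_def K_def)
  qed
  also have "\<dots> = r / K * \<phi> (t + 1) (m - 1) + s / K * \<phi> (t + 1) m"
    unfolding r_def s_def K_def t_def m_def by (rule sum_phi[OF y])
  also have "\<dots> \<le> r / K * (p * W0) + s / K * (K * p * W0)"
  proof (rule add_mono)
    have "\<phi> (t + 1) (m - 1) \<le> p * W0"
      unfolding \<phi>_def p_def W0_def using K3 by (simp add: add.commute add.left_commute)
    then show "r / K * \<phi> (t + 1) (m - 1) \<le> r / K * (p * W0)"
      using r2 K3 by (intro mult_left_mono) auto
    have "K ^ m = K * p" unfolding p_def using m1 by (simp add: power_eq_if)
    then have "\<phi> (t + 1) m = K * p * W0" unfolding \<phi>_def W0_def using m1
      by (simp add: add.commute add.left_commute)
    then show "s / K * \<phi> (t + 1) m \<le> s / K * (K * p * W0)" by simp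
  qed
  also have "\<dots> = p * W0 * (r / K + s)" using K3 by (simp add: field_simps)
  also have "\<dots> \<le> p * W0 * (K - 1)"
  proof (rule mult_left_mono)
    have s': "s = K - r" using rs by simp
    have "r / K + s = K - r * (K - 1) / K" unfolding s' using K3 by (simp add: field_simps)
    moreover have "1 \<le> r * (K - 1) / K"
    proof -
      have "K \<le> 2 * (K - 1)" using K3 by simp
      also have "\<dots> \<le> r * (K - 1)" using r2 K3 by (intro mult_right_mono) auto
      finally show ?thesis using K3 by simp
    qed
    ultimately show "r / K + s \<le> K - 1" by simp
    show "0 \<le> p * W0" using p0 W0nn by simp
  qed
  also have "\<dots> \<le> p * ((2 * K + 1) / (2 * K))^2 * (t + 2 * K)^2 * (K - 1)"
  proof -
    have "t + 1 + 2 * K \<le> (2 * K + 1) / (2 * K) * (t + 2 * K)"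
      using K3 t0 by (simp add: field_simps)
    then have "W0 \<le> ((2 * K + 1) / (2 * K) * (t + 2 * K))^2"
      unfolding W0_def using t0 K3 by (intro power_mono) auto
    then have "W0 \<le> ((2 * K + 1) / (2 * K))^2 * (t + 2 * K)^2" by (simp only: power_mult_distrib)
    then have "p * W0 \<le> p * (((2 * K + 1) / (2 * K))^2 * (t + 2 * K)^2)" using p0 by simp
    then show ?thesis using K3 by (intro mult_right_mono) (auto simp: algebra_simps)
  qed
  also have "\<dots> = rho * psi y"
  proof -
    have "K ^ m = K * p" unfolding p_def using m1 by (simp add: power_eq_if)
    then show ?thesis unfolding rho_def psi_def K_def[symmetric] t_def[symmetric] m_def[symmetric]
      using K3 by (simp add: field_simps)
  qed
  finally show ?thesis .
qed

lemma one_le_sq: "0 \<le> t \<Longrightarrow> 1 \<le> (t + 2 * real k)^2"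
  using K_ge by (intro one_le_power) simp

lemma h0_psi: "h0 y + 1 \<le> ((real k)^2 + (real k)^3 + 2) * psi y" if y: "y \<in> Q0"
proof -
  define K where "K = real k"
  define t where "t = Ts y"
  define m where "m = real (nz y)"
  have K3: "3 \<le> K" using K_ge unfolding K_def .
  have t0: "0 \<le> t" unfolding t_def by (rule Ts_nonneg)
  have mK: "m \<le> K" unfolding m_def K_def using Q0_D(3)[OF y] nk by simp
  have m0: "0 \<le> m" unfolding m_def by simp
  have one: "1 \<le> (t + 2 * K)^2" using one_le_sq[OF t0] unfolding K_def .
  have a: "(t + K * m)^2 \<le> K^2 * (t + 2 * K)^2"
  proof -
    have "t \<le> K * t" using mult_right_mono[of 1 K t] K3 t0 by simp
    moreover have "K * m \<le> K * (2 * K)" using mK K3 by (intro mult_left_mono) auto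
    ultimately have "t + K * m \<le> K * (t + 2 * K)" by (simp add: algebra_simps)
    then have "(t + K * m)^2 \<le> (K * (t + 2 * K))^2" using t0 m0 K3 by (intro power_mono) auto
    then show ?thesis by (simp add: power_mult_distrib)
  qed
  have b: "K^2 * m + 2 \<le> (K^3 + 2) * (t + 2 * K)^2"
  proof -
    have "K^2 * m \<le> K^2 * K" using mK by (intro mult_left_mono) auto
    then have "K^2 * m + 2 \<le> K^3 + 2" by (simp add: power2_eq_square power3_eq_cube)
    also have "\<dots> \<le> (K^3 + 2) * (t + 2 * K)^2"
    proof -
      have "0 \<le> K^3 + 2" using K3 by simp
      then have "(K^3 + 2) * 1 \<le> (K^3 + 2) * (t + 2 * K)^2" by (rule mult_left_mono[OF one])
      then show ?thesis by simp
    qed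
    finally show ?thesis .
  qed
  have "h0 y + 1 = (t + K * m)^2 + K^2 * m + 2"
    unfolding h0_def h0f_def K_def t_def m_def by simp
  also have "\<dots> \<le> (K^2 + K^3 + 2) * (t + 2 * K)^2" using a b by (simp add: algebra_simps)
  also have "\<dots> \<le> (K^2 + K^3 + 2) * psi y"
    using psi_ge[of y] K3 unfolding K_def[symmetric] t_def[symmetric] by (intro mult_left_mono) auto
  finally show ?thesis unfolding K_def .
qed

lemma closedQ0': "\<And>a c. a \<in> Q0 \<Longrightarrow> c \<in> succ a \<Longrightarrow> T a c \<noteq> 0 \<Longrightarrow> \<not> inS n c \<Longrightarrow> c \<in> Q0"
  using closed_Q0 by blast

lemma E1: assumes y: "y \<in> Q0" shows "Ex y (\<lambda>_. 1) = 1"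
proof -
  define u where "u a = Ex a (\<lambda>_. 1) - 1" for a
  have gb: "\<bar>(\<lambda>_. 1::real) z\<bar> \<le> 1 * g0 z" for z :: "nat \<Rightarrow> nat"
    unfolding g0_def using zero_le_power2[of "Ts z"] by simp
  have uq: "u a = (\<Sum>c\<in>succ a. T a c * (if inS n c then 0 else u c))" if a: "a \<in> Q0" for a
  proof -
    have "Ex a (\<lambda>_. 1) = (\<Sum>c\<in>succ a. T a c * (if inS n c then 1 else Ex c (\<lambda>_. 1)))"
    proof (rule dec_Ex)
      fix c assume "c \<in> succ a" "T a c \<noteq> 0" "\<not> inS n c"
      then have "c \<in> Q0" using closed_Q0[OF a] by blast
      then show "(\<lambda>zs. P c zs * 1) summable_on FRP" using summ(1)[OF gb] by simp
    qed
    then have "u a = (\<Sum>c\<in>succ a. T a c * (if inS n c then 1 else Ex c (\<lambda>_. 1))) - (\<Sum>c\<in>succ a. T a c)"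
      unfolding u_def sum_T_one[OF a] by simp
    also have "\<dots> = (\<Sum>c\<in>succ a. T a c * (if inS n c then 1 else Ex c (\<lambda>_. 1)) - T a c)"
      by (simp add: sum_subtractf)
    also have "\<dots> = (\<Sum>c\<in>succ a. T a c * (if inS n c then 0 else u c))"
      by (rule sum.cong) (auto simp: u_def algebra_simps)
    finally show ?thesis .
  qed
  have bd: "\<bar>u a\<bar> \<le> ((real k)^2 + (real k)^3 + 2) * psi a" if a: "a \<in> Q0" for a
  proof -
    have "\<bar>Ex a (\<lambda>_. 1)\<bar> \<le> 1 * h0 a" using summ(2)[OF gb a] by simp
    then have "\<bar>u a\<bar> \<le> h0 a + 1" unfolding u_def by simp
    also have "\<dots> \<le> ((real k)^2 + (real k)^3 + 2) * psi a" by (rule h0_psi[OF a])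
    finally show ?thesis .
  qed
  have C0: "0 \<le> (real k)^2 + (real k)^3 + 2" by (intro add_nonneg_nonneg) auto
  have "u y = 0"
    using closedQ0' psi_cond rho_bounds(1) rho_bounds(2) C0 uq bd y
    by (rule uni)
  then show ?thesis unfolding u_def by simp
qed

end

lemma dsum:
  fixes f :: "nat \<Rightarrow> real"
  shows "2 * (\<Sum>i=1..N. \<Sum>l=i+1..N. f i * f l) = (\<Sum>i=1..N. f i)^2 - (\<Sum>i=1..N. (f i)^2)"
proof (induction N)
  case 0 show ?case by simp
next
  case (Suc N)
  have inner: "(\<Sum>l=i+1..Suc N. f i * f l) = (\<Sum>l=i+1..N. f i * f l) + f i * f (Suc N)"
    if "i \<in> {1..N}" for i
    using that by (simp add: sum.cl_ivl_Suc)
  have "(\<Sum>i=1..Suc N. \<Sum>l=i+1..Suc N. f i * f l) = (\<Sum>i=1..N. \<Sum>l=i+1..Suc N. f i * f l)"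
    by (simp add: sum.cl_ivl_Suc)
  also have "\<dots> = (\<Sum>i=1..N. (\<Sum>l=i+1..N. f i * f l) + f i * f (Suc N))"
    by (rule sum.cong[OF refl]) (rule inner)
  also have "\<dots> = (\<Sum>i=1..N. \<Sum>l=i+1..N. f i * f l) + (\<Sum>i=1..N. f i) * f (Suc N)"
    by (simp add: sum.distrib sum_distrib_right)
  finally have L: "(\<Sum>i=1..Suc N. \<Sum>l=i+1..Suc N. f i * f l)
      = (\<Sum>i=1..N. \<Sum>l=i+1..N. f i * f l) + (\<Sum>i=1..N. f i) * f (Suc N)" .
  have S: "(\<Sum>i=1..Suc N. f i) = (\<Sum>i=1..N. f i) + f (Suc N)" by (simp add: sum.cl_ivl_Suc)
  have Q: "(\<Sum>i=1..Suc N. (f i)^2) = (\<Sum>i=1..N. (f i)^2) + (f (Suc N))^2" by (simp add: sum.cl_ivl_Suc)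
  show ?case unfolding L S Q using Suc.IH by (simp add: power2_eq_square algebra_simps)
qed

context ch begin

definition Qs :: "(nat \<Rightarrow> nat) \<Rightarrow> real" where
  "Qs w = (\<Sum>i=1..n-1. real (w i)^2)"
definition Dot :: "(nat \<Rightarrow> nat) \<Rightarrow> (nat \<Rightarrow> nat) \<Rightarrow> real" where
  "Dot d w = (\<Sum>i=1..n-1. real (d i) * real (w i))"
definition Hh :: "nat \<Rightarrow> real" where
  "Hh m = (\<Sum>i=1..m. 1 / (real k - real n + 1 + real i))"
definition ell :: "real \<Rightarrow> (nat \<Rightarrow> nat) \<Rightarrow> (nat \<Rightarrow> nat) \<Rightarrow> real" where
  "ell b d w = (1 - b/2) * (2 * Dot d w + 2 * Hh (nz w) * Ts d + Qs d)
     + b/2 * (2 * Ts d * (Ts w + real k * Hh (nz w)) + (Ts d)^2)"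

lemma V_eq: "Vfun b n w = (1 - b/2) * Qs w + b/2 * (Ts w)^2"
proof -
  have "2 * (\<Sum>i=1..n-1. \<Sum>l=i+1..n-1. real (w i) * real (w l)) = (Ts w)^2 - Qs w"
    unfolding Ts_def Qs_def by (rule dsum)
  then have h: "(\<Sum>i=1..n-1. \<Sum>l=i+1..n-1. real (w i) * real (w l)) = ((Ts w)^2 - Qs w) / 2"
    by simp
  have "Vfun b n w = Qs w + b * (\<Sum>i=1..n-1. \<Sum>l=i+1..n-1. real (w i) * real (w l))"
    unfolding Vfun_def Qs_def by simp
  also have "\<dots> = Qs w + b * (((Ts w)^2 - Qs w) / 2)" unfolding h ..
  also have "\<dots> = (1 - b/2) * Qs w + b/2 * (Ts w)^2" by (simp add: field_simps)
  finally show ?thesis .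
qed

lemma Ts_add: "Ts (vec_add w d) = Ts w + Ts d"
  unfolding Ts_def vec_add_def by (simp add: sum.distrib)

lemma Qs_add: "Qs (vec_add w d) = Qs w + 2 * Dot d w + Qs d"
proof -
  have "Qs (vec_add w d) = (\<Sum>i=1..n-1. real (w i)^2 + 2 * (real (d i) * real (w i)) + real (d i)^2)"
    unfolding Qs_def vec_add_def by (rule sum.cong) (auto simp: power2_eq_square algebra_simps)
  then show ?thesis unfolding Qs_def Dot_def by (simp add: sum.distrib sum_distrib_left)
qed

lemma shift_V:
  "Vfun b n (vec_add w d) - Vfun b n w
    = (1 - b/2) * (2 * Dot d w + Qs d) + b/2 * (2 * Ts d * Ts w + (Ts d)^2)"
  unfolding V_eq Ts_add Qs_add by (simp add: power2_eq_square algebra_simps)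

lemma Dot_vadd: "l \<in> {1..n-1} \<Longrightarrow> Dot d (vadd y l) = Dot d y + real (d l)"
proof -
  assume l: "l \<in> {1..n-1}"
  have "Dot d (vadd y l) = (\<Sum>i=1..n-1. real (d i) * real (y i) + (if i = l then real (d l) else 0))"
    unfolding Dot_def vadd_apply by (rule sum.cong) (auto simp: algebra_simps)
  also have "\<dots> = Dot d y + real (d l)" unfolding Dot_def using l by (simp add: sum.distrib)
  finally show ?thesis .
qed

lemma Hh_0: "Hh 0 = 0" by (simp add: Hh_def)

lemma Hh_step: "1 \<le> m \<Longrightarrow> Hh m = Hh (m - 1) + 1 / (real k - real n + 1 + real m)"
  by (cases m) (auto simp: Hh_def sum.cl_ivl_Suc)

lemma sum_Ts: assumes y: "y \<in> Q0" shows "(\<Sum>z\<in>succ y. T y z * Ts z) = Ts y + 1"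
proof -
  have "(\<Sum>z\<in>succ y. T y z * (\<lambda>t m. t) (Ts z) (nz z))
      = (real k - real n + 1 + real (nz y)) / real k * (Ts y + 1) + (real n - 1 - real (nz y)) / real k * (Ts y + 1)"
    by (rule sum_phi[OF y])
  then have A: "(\<Sum>z\<in>succ y. T y z * Ts z)
      = (real k - real n + 1 + real (nz y)) / real k * (Ts y + 1) + (real n - 1 - real (nz y)) / real k * (Ts y + 1)"
    by simp
  have B: "(real k - real n + 1 + real (nz y)) / real k * (Ts y + 1) + (real n - 1 - real (nz y)) / real k * (Ts y + 1)
      = Ts y + 1" using k_pos by (simp add: field_simps)
  show ?thesis unfolding A B ..
qed

lemma sum_Hh: assumes y: "y \<in> Q0" shows "(\<Sum>z\<in>succ y. T y z * Hh (nz z)) = Hh (nz y) - 1 / real k"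
proof -
  note D = Q0_D[OF y]
  define r where "r = real k - real n + 1 + real (nz y)"
  have r0: "0 < r" unfolding r_def using nk D(4) by simp
  have "(\<Sum>z\<in>succ y. T y z * (\<lambda>t m. Hh m) (Ts z) (nz z))
      = r / real k * Hh (nz y - 1) + (real n - 1 - real (nz y)) / real k * Hh (nz y)"
    unfolding r_def by (rule sum_phi[OF y])
  moreover have "Hh (nz y - 1) = Hh (nz y) - 1 / r" using Hh_step[OF D(4)] unfolding r_def by simp
  ultimately have "(\<Sum>z\<in>succ y. T y z * Hh (nz z))
      = r / real k * (Hh (nz y) - 1 / r) + (real n - 1 - real (nz y)) / real k * Hh (nz y)" by simp
  also have "\<dots> = Hh (nz y) - 1 / real k"
  proof -
    define s where "s = real n - 1 - real (nz y)"
    have rs: "r + s = real k" unfolding r_def s_def by simp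
    have "r / real k * (Hh (nz y) - 1 / r) + s / real k * Hh (nz y) = (r + s) / real k * Hh (nz y) - 1 / real k"
      using r0 k_pos by (simp add: field_simps)
    then have "r / real k * (Hh (nz y) - 1 / r) + s / real k * Hh (nz y) = Hh (nz y) - 1 / real k"
      unfolding rs using k_pos by simp
    then show ?thesis unfolding s_def .
  qed
  finally show ?thesis .
qed

definition supp_ok :: "(nat \<Rightarrow> nat) \<Rightarrow> (nat \<Rightarrow> nat) \<Rightarrow> bool" where
  "supp_ok d y \<longleftrightarrow> (\<forall>i. d i \<noteq> 0 \<longrightarrow> y i \<noteq> 0)"

lemma sum_Dot:
  assumes y: "y \<in> Q0" and sd: "supp_ok d y"
  shows "(\<Sum>z\<in>succ y. T y z * Dot d z) = Dot d y + Ts d / real k"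
proof -
  note D = Q0_D[OF y]
  have Z: "(\<Sum>l\<in>Zs y. Dot d (vadd y l)) = real (nz y) * Dot d y"
  proof -
    have "(\<Sum>l\<in>Zs y. Dot d (vadd y l)) = (\<Sum>l\<in>Zs y. Dot d y)"
    proof (rule sum.cong[OF refl])
      fix l assume "l \<in> Zs y"
      then have l: "l \<in> {1..n-1}" "y l = 0" by (auto simp: Zs_def)
      then have "d l = 0" using sd unfolding supp_ok_def by blast
      then show "Dot d (vadd y l) = Dot d y" using Dot_vadd[OF l(1)] by simp
    qed
    then show ?thesis by (simp add: nz_Zs)
  qed
  have TsZ: "Ts d = (\<Sum>l\<in>NZs y. real (d l))"
  proof -
    have "Ts d = (\<Sum>l\<in>Zs y \<union> NZs y. real (d l))"
      unfolding Ts_def by (rule sum.cong) (auto simp: Zs_def NZs_def)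
    also have "\<dots> = (\<Sum>l\<in>Zs y. real (d l)) + (\<Sum>l\<in>NZs y. real (d l))"
      by (rule sum.union_disjoint) (auto simp: Zs_def NZs_def)
    also have "(\<Sum>l\<in>Zs y. real (d l)) = 0"
      using sd unfolding supp_ok_def Zs_def by (intro sum.neutral) auto
    finally show ?thesis by simp
  qed
  have NZ: "(\<Sum>l\<in>NZs y. Dot d (vadd y l)) = (real n - 1 - real (nz y)) * Dot d y + Ts d"
  proof -
    have "(\<Sum>l\<in>NZs y. Dot d (vadd y l)) = (\<Sum>l\<in>NZs y. Dot d y + real (d l))"
      by (rule sum.cong[OF refl]) (auto simp: NZs_def Dot_vadd)
    also have "\<dots> = real (card (NZs y)) * Dot d y + Ts d" unfolding TsZ by (simp add: sum.distrib)
    also have "real (card (NZs y)) = real n - 1 - real (nz y)"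
      using D(3) n3 by (simp add: card_NZs of_nat_diff)
    finally show ?thesis .
  qed
  have pos: "0 < real (nz y)" using D(4) by simp
  show ?thesis unfolding avg[OF y] Z NZ using pos k_pos by (simp add: field_simps)
qed

lemma ell_harm:
  assumes y: "y \<in> Q0" and sd: "supp_ok d y"
  shows "(\<Sum>z\<in>succ y. T y z * ell b d z) = ell b d y"
proof -
  define c0 where "c0 = (1 - b/2) * Qs d + b/2 * (Ts d)^2"
  define c1 where "c1 = 2 * (1 - b/2)"
  define c2 where "c2 = 2 * (1 - b/2) * Ts d + b * real k * Ts d"
  define c3 where "c3 = b * Ts d"
  have e: "ell b d z = c0 + c1 * Dot d z + c2 * Hh (nz z) + c3 * Ts z" for z
    unfolding ell_def c0_def c1_def c2_def c3_def by (simp add: algebra_simps)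
  have "(\<Sum>z\<in>succ y. T y z * ell b d z)
      = (\<Sum>z\<in>succ y. c0 * T y z + c1 * (T y z * Dot d z) + c2 * (T y z * Hh (nz z)) + c3 * (T y z * Ts z))"
    unfolding e by (rule sum.cong) (auto simp: algebra_simps)
  also have "\<dots> = c0 * (\<Sum>z\<in>succ y. T y z) + c1 * (\<Sum>z\<in>succ y. T y z * Dot d z)
      + c2 * (\<Sum>z\<in>succ y. T y z * Hh (nz z)) + c3 * (\<Sum>z\<in>succ y. T y z * Ts z)"
    by (simp add: sum.distrib sum_distrib_left)
  also have "\<dots> = c0 + c1 * (Dot d y + Ts d / real k) + c2 * (Hh (nz y) - 1 / real k) + c3 * (Ts y + 1)"
    unfolding sum_T_one[OF y] sum_Dot[OF y sd] sum_Hh[OF y] sum_Ts[OF y] by simp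
  also have "\<dots> = ell b d y"
    unfolding e c1_def c2_def c3_def using k_pos by (simp add: field_simps)
  finally show ?thesis .
qed

end
context ch begin

definition Qd :: "(nat \<Rightarrow> nat) \<Rightarrow> (nat \<Rightarrow> nat) set" where
  "Qd d = {y \<in> Q0. supp_ok d y}"

lemma sum_succ_reindex: assumes y: "y \<in> Q0" shows "(\<Sum>z\<in>succ y. F z) = (\<Sum>l\<in>{1..n-1}. F (vadd y l))"
proof -
  have "succ y = vadd y ` {1..n-1}" by (rule succ_Q0[OF y])
  then show ?thesis by (simp only: sum.reindex[OF vadd_inj] o_def)
qed

lemma Qs_le: "Qs w \<le> (Ts w)^2"
proof -
  have "2 * (\<Sum>i=1..n-1. \<Sum>l=i+1..n-1. real (w i) * real (w l)) = (Ts w)^2 - Qs w"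
    unfolding Ts_def Qs_def by (rule dsum)
  moreover have "0 \<le> (\<Sum>i=1..n-1. \<Sum>l=i+1..n-1. real (w i) * real (w l))"
    by (intro sum_nonneg) auto
  ultimately show ?thesis by simp
qed

lemma Qs_nonneg: "0 \<le> Qs w" unfolding Qs_def by (intro sum_nonneg) auto

lemma V_bound: "\<bar>Vfun b n z\<bar> \<le> (1 + \<bar>b\<bar>) * g0 z"
proof -
  have "\<bar>Vfun b n z\<bar> \<le> \<bar>1 - b/2\<bar> * Qs z + \<bar>b/2\<bar> * (Ts z)^2"
    unfolding V_eq using Qs_nonneg[of z] by (simp add: abs_mult abs_triangle_ineq[THEN order_trans])
  also have "\<dots> \<le> \<bar>1 - b/2\<bar> * (Ts z)^2 + \<bar>b/2\<bar> * (Ts z)^2"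
    using Qs_le[of z] by (intro add_mono mult_left_mono) auto
  also have "\<dots> \<le> (1 + \<bar>b\<bar>) * (Ts z)^2"
  proof -
    have "\<bar>1 - b/2\<bar> + \<bar>b/2\<bar> \<le> 1 + \<bar>b\<bar>" using abs_triangle_ineq4[of 1 "b/2"] by simp
    then have "(\<bar>1 - b/2\<bar> + \<bar>b/2\<bar>) * (Ts z)^2 \<le> (1 + \<bar>b\<bar>) * (Ts z)^2" by (intro mult_right_mono) auto
    then show ?thesis by (simp add: distrib_right)
  qed
  also have "\<dots> \<le> (1 + \<bar>b\<bar>) * g0 z" unfolding g0_def by (intro mult_left_mono) auto
  finally show ?thesis .
qed

lemma dec_V:
  assumes y: "y \<in> Q0"
  shows "Ex y (Vfun b n) = (\<Sum>z\<in>succ y. T y z * (if inS n z then Vfun b n z else Ex z (Vfun b n)))"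
proof (rule dec_Ex)
  fix c assume "c \<in> succ y" "T y c \<noteq> 0" "\<not> inS n c"
  then have "c \<in> Q0" using closed_Q0[OF y] by blast
  then show "(\<lambda>zs. P c zs * Vfun b n (last zs)) summable_on FRP" using summ(1)[OF V_bound] by blast
qed

lemma Qd_facts:
  assumes w: "w \<in> Qd d"
  shows "vec_add w d \<in> Q0" "nz (vec_add w d) = nz w"
    "\<And>l. l \<in> {1..n-1} \<Longrightarrow> vadd (vec_add w d) l = vec_add (vadd w l) d"
    "\<And>l. l \<in> {1..n-1} \<Longrightarrow> T (vec_add w d) (vadd (vec_add w d) l) = T w (vadd w l)"
    "\<And>l. l \<in> {1..n-1} \<Longrightarrow> inS n (vadd (vec_add w d) l) \<longleftrightarrow> inS n (vadd w l)"
    "\<And>l. l \<in> {1..n-1} \<Longrightarrow> \<not> inS n (vadd w l) \<Longrightarrow> vadd w l \<in> Qd d"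
proof -
  have wQ: "w \<in> Q0" and sd: "supp_ok d w" using w by (auto simp: Qd_def)
  note D = Q0_D[OF wQ]
  have Zeq: "Zs (vec_add w d) = Zs w"
    using sd by (auto simp: Zs_def vec_add_def supp_ok_def)
  show nzeq: "nz (vec_add w d) = nz w" by (simp add: nz_Zs Zeq)
  have st: "vec_add w d \<in> states n"
    using D(1) sd unfolding states_def supp_ok_def vec_add_def by auto
  show wdQ: "vec_add w d \<in> Q0"
    unfolding Q0_def using st nzeq D inS_iff[OF st] inS_iff[OF D(1)] by auto
  have zero_iff: "vec_add w d l = 0 \<longleftrightarrow> w l = 0" for l
    using sd unfolding supp_ok_def vec_add_def by auto
  show vv: "vadd (vec_add w d) l = vec_add (vadd w l) d" for l
    by (rule ext) (simp add: vec_add_def unit_vec_def)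
  show "T (vec_add w d) (vadd (vec_add w d) l) = T w (vadd w l)" if l: "l \<in> {1..n-1}" for l
    unfolding T_step[OF wdQ l] T_step[OF wQ l] nzeq zero_iff ..
  show "inS n (vadd (vec_add w d) l) \<longleftrightarrow> inS n (vadd w l)" if l: "l \<in> {1..n-1}" for l
    unfolding inS_vadd[OF wdQ l] inS_vadd[OF wQ l] nzeq zero_iff ..
  show "vadd w l \<in> Qd d" if l: "l \<in> {1..n-1}" and nS: "\<not> inS n (vadd w l)" for l
  proof -
    have "vadd w l \<in> succ w" using succ_Q0[OF wQ] l by blast
    then have "vadd w l \<in> Q0" using closed_Q0[OF wQ _ nS] by blast
    moreover have "supp_ok d (vadd w l)" using sd by (auto simp: supp_ok_def vadd_apply)
    ultimately show ?thesis by (simp add: Qd_def)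
  qed
qed

end
context ch begin

lemma Hh_nonneg: "0 \<le> Hh m"
  unfolding Hh_def using nk by (intro sum_nonneg) auto

lemma Hh_le: "Hh m \<le> real m"
proof -
  have "Hh m \<le> (\<Sum>i=1..m. (1::real))"
    unfolding Hh_def using nk by (intro sum_mono) (auto simp: field_simps)
  then show ?thesis by simp
qed

lemma Dot_nonneg: "0 \<le> Dot d w" unfolding Dot_def by (intro sum_nonneg) auto

lemma Dot_le: "Dot d w \<le> Ts d * Ts w"
proof -
  have "Dot d w \<le> (\<Sum>i=1..n-1. Ts d * real (w i))"
    unfolding Dot_def
  proof (rule sum_mono)
    fix i assume i: "i \<in> {1..n-1}"
    have "real (d i) \<le> Ts d" unfolding Ts_def using i by (intro member_le_sum) auto
    then show "real (d i) * real (w i) \<le> Ts d * real (w i)" by (intro mult_right_mono) auto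
  qed
  also have "\<dots> = Ts d * Ts w" unfolding Ts_def by (simp add: sum_distrib_left)
  finally show ?thesis .
qed

lemma t_le_sq: "0 \<le> t \<Longrightarrow> t \<le> (t + 2 * real k)^2"
proof -
  assume t: "0 \<le> t"
  have "1 \<le> t + 2 * real k" using K_ge t by simp
  then have "(t + 2 * real k) * 1 \<le> (t + 2 * real k) * (t + 2 * real k)" by (intro mult_left_mono) auto
  then show ?thesis using K_ge by (simp add: power2_eq_square)
qed

lemma lin_bound:
  assumes "0 \<le> t" "0 \<le> a" "0 \<le> c"
  shows "a * t + c \<le> (a + c) * (t + 2 * real k)^2"
proof -
  have "a * t \<le> a * (t + 2 * real k)^2" using t_le_sq[OF assms(1)] assms by (intro mult_left_mono) auto
  moreover have "c \<le> c * (t + 2 * real k)^2" using one_le_sq[OF assms(1)] assms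
    using mult_left_mono[of 1 "(t + 2 * real k)^2" c] by simp
  ultimately show ?thesis by (simp add: distrib_right)
qed

lemma ell_bound:
  assumes w: "w \<in> Q0"
  shows "\<bar>ell b d w\<bar> \<le> (\<bar>1 - b/2\<bar> * (2 * Ts d) + \<bar>b/2\<bar> * (2 * Ts d)
      + (\<bar>1 - b/2\<bar> * (2 * real k * Ts d + Qs d) + \<bar>b/2\<bar> * (2 * Ts d * (real k)^2 + (Ts d)^2)))
      * psi w"
proof -
  define t where "t = Ts w"
  define D where "D = Ts d"
  define K where "K = real k"
  define X where "X = 2 * Dot d w + 2 * Hh (nz w) * D + Qs d"
  define Y where "Y = 2 * D * (t + K * Hh (nz w)) + D^2"
  have t0: "0 \<le> t" unfolding t_def by (rule Ts_nonneg)
  have D0: "0 \<le> D" unfolding D_def by (rule Ts_nonneg)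
  have K3: "3 \<le> K" unfolding K_def by (rule K_ge)
  have HK: "Hh (nz w) \<le> K" using Hh_le[of "nz w"] Q0_D(3)[OF w] nk unfolding K_def by simp
  have H0: "0 \<le> Hh (nz w)" by (rule Hh_nonneg)
  have X0: "0 \<le> X" unfolding X_def using Dot_nonneg[of d w] H0 D0 Qs_nonneg[of d] by simp
  have Y0: "0 \<le> Y" unfolding Y_def using H0 D0 t0 K3 by simp
  have Xb: "X \<le> (2 * D) * t + (2 * K * D + Qs d)"
  proof -
    have "Dot d w \<le> D * t" using Dot_le unfolding D_def t_def .
    moreover have "Hh (nz w) * D \<le> K * D" using HK D0 by (intro mult_right_mono) auto
    ultimately show ?thesis unfolding X_def by (simp add: algebra_simps)
  qed
  have Yb: "Y \<le> (2 * D) * t + (2 * D * K^2 + D^2)"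
  proof -
    have "K * Hh (nz w) \<le> K * K" using HK K3 by (intro mult_left_mono) auto
    then have "2 * D * (K * Hh (nz w)) \<le> 2 * D * (K * K)" by (rule mult_left_mono) (use D0 in auto)
    then show ?thesis unfolding Y_def by (simp add: algebra_simps power2_eq_square)
  qed
  have "\<bar>ell b d w\<bar> = \<bar>(1 - b/2) * X + b/2 * Y\<bar>"
    unfolding ell_def X_def Y_def t_def D_def K_def by simp
  also have "\<dots> \<le> \<bar>1 - b/2\<bar> * X + \<bar>b/2\<bar> * Y"
    using X0 Y0 abs_triangle_ineq[of "(1 - b/2) * X" "b/2 * Y"] by (simp add: abs_mult)
  also have "\<dots> \<le> \<bar>1 - b/2\<bar> * ((2 * D) * t + (2 * K * D + Qs d)) + \<bar>b/2\<bar> * ((2 * D) * t + (2 * D * K^2 + D^2))"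
    using Xb Yb by (intro add_mono mult_left_mono) auto
  also have "\<dots> = (\<bar>1 - b/2\<bar> * (2 * D) + \<bar>b/2\<bar> * (2 * D)) * t
      + (\<bar>1 - b/2\<bar> * (2 * K * D + Qs d) + \<bar>b/2\<bar> * (2 * D * K^2 + D^2))"
    by (simp add: algebra_simps)
  also have "\<dots> \<le> (\<bar>1 - b/2\<bar> * (2 * D) + \<bar>b/2\<bar> * (2 * D)
      + (\<bar>1 - b/2\<bar> * (2 * K * D + Qs d) + \<bar>b/2\<bar> * (2 * D * K^2 + D^2))) * (t + 2 * real k)^2"
    using D0 K3 Qs_nonneg[of d] t0 by (intro lin_bound) auto
  also have "\<dots> \<le> (\<bar>1 - b/2\<bar> * (2 * D) + \<bar>b/2\<bar> * (2 * D)
      + (\<bar>1 - b/2\<bar> * (2 * K * D + Qs d) + \<bar>b/2\<bar> * (2 * D * K^2 + D^2))) * psi w"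
    using psi_ge[of w] D0 K3 Qs_nonneg[of d] unfolding t_def by (intro mult_left_mono) auto
  finally show ?thesis unfolding D_def K_def .
qed

lemma h0_shift_bound:
  assumes w: "w \<in> Q0" and D0: "0 \<le> D"
  shows "h0f (Ts w + D) (nz w) \<le> ((1 + D + (real k)^2)^2 + (real k)^3 + 1) * psi w"
proof -
  define t where "t = Ts w"
  define K where "K = real k"
  define m where "m = real (nz w)"
  have t0: "0 \<le> t" unfolding t_def by (rule Ts_nonneg)
  have K3: "3 \<le> K" unfolding K_def by (rule K_ge)
  have mK: "m \<le> K" unfolding m_def K_def using Q0_D(3)[OF w] nk by simp
  have m0: "0 \<le> m" unfolding m_def by simp
  have one: "1 \<le> (t + 2 * K)^2" using one_le_sq[OF t0] unfolding K_def .
  have a: "(t + D + K * m)^2 \<le> (1 + D + K^2)^2 * (t + 2 * K)^2"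
  proof -
    have "K * m \<le> K * K" using mK K3 by (intro mult_left_mono) auto
    then have e1: "K * m \<le> K^2" by (simp add: power2_eq_square)
    have "(D + K^2) * 1 \<le> (D + K^2) * (t + 2 * K)" using D0 K3 t0 by (intro mult_left_mono) auto
    then have e2: "D + K^2 \<le> (D + K^2) * (t + 2 * K)" by simp
    have e3: "(1 + D + K^2) * (t + 2 * K) = (t + 2 * K) + (D + K^2) * (t + 2 * K)"
      by (simp add: algebra_simps)
    have "t + D + K * m \<le> (1 + D + K^2) * (t + 2 * K)"
      using e1 e2 e3 K3 by linarith
    then have "(t + D + K * m)^2 \<le> ((1 + D + K^2) * (t + 2 * K))^2"
      using t0 D0 m0 K3 by (intro power_mono) auto
    then show ?thesis by (simp add: power_mult_distrib)
  qed
  have b: "K^2 * m + 1 \<le> (K^3 + 1) * (t + 2 * K)^2"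
  proof -
    have "K^2 * m \<le> K^2 * K" using mK by (intro mult_left_mono) auto
    then have "K^2 * m + 1 \<le> K^3 + 1" by (simp add: power2_eq_square power3_eq_cube)
    also have "\<dots> \<le> (K^3 + 1) * (t + 2 * K)^2"
    proof -
      have "0 \<le> K^3 + 1" using K3 by simp
      then have "(K^3 + 1) * 1 \<le> (K^3 + 1) * (t + 2 * K)^2" by (rule mult_left_mono[OF one])
      then show ?thesis by simp
    qed
    finally show ?thesis .
  qed
  have "h0f (Ts w + D) (nz w) = (t + D + K * m)^2 + K^2 * m + 1"
    unfolding h0f_def t_def K_def m_def by simp
  also have "\<dots> \<le> ((1 + D + K^2)^2 + K^3 + 1) * (t + 2 * K)^2" using a b by (simp add: algebra_simps)
  also have "\<dots> \<le> ((1 + D + K^2)^2 + K^3 + 1) * psi w"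
    using psi_ge[of w] K3 unfolding K_def[symmetric] t_def[symmetric] by (intro mult_left_mono) auto
  finally show ?thesis unfolding K_def .
qed

lemma shift:
  assumes w: "w \<in> Qd d"
  shows "Ex (vec_add w d) (Vfun b n) = Ex w (Vfun b n) + ell b d w"
proof -
  define V where "V = Vfun b n"
  define u where "u a = Ex (vec_add a d) V - Ex a V - ell b d a" for a
  have uq: "u a = (\<Sum>c\<in>succ a. T a c * (if inS n c then 0 else u c))" if a: "a \<in> Qd d" for a
  proof -
    have aQ: "a \<in> Q0" and sd: "supp_ok d a" using a by (auto simp: Qd_def)
    note F = Qd_facts[OF a]
    have E1: "Ex (vec_add a d) V = (\<Sum>l\<in>{1..n-1}. T a (vadd a l) *
        (if inS n (vadd a l) then V (vec_add (vadd a l) d) else Ex (vec_add (vadd a l) d) V))"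
    proof -
      have "Ex (vec_add a d) V = (\<Sum>z\<in>succ (vec_add a d). T (vec_add a d) z * (if inS n z then V z else Ex z V))"
        unfolding V_def by (rule dec_V[OF F(1)])
      also have "\<dots> = (\<Sum>l\<in>{1..n-1}. T (vec_add a d) (vadd (vec_add a d) l) *
          (if inS n (vadd (vec_add a d) l) then V (vadd (vec_add a d) l) else Ex (vadd (vec_add a d) l) V))"
        by (rule sum_succ_reindex[OF F(1)])
      also have "\<dots> = (\<Sum>l\<in>{1..n-1}. T a (vadd a l) *
          (if inS n (vadd a l) then V (vec_add (vadd a l) d) else Ex (vec_add (vadd a l) d) V))"
      proof (rule sum.cong[OF refl])
        fix l assume l: "l \<in> {1..n-1}"
        show "T (vec_add a d) (vadd (vec_add a d) l) *
          (if inS n (vadd (vec_add a d) l) then V (vadd (vec_add a d) l) else Ex (vadd (vec_add a d) l) V)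
          = T a (vadd a l) *
          (if inS n (vadd a l) then V (vec_add (vadd a l) d) else Ex (vec_add (vadd a l) d) V)"
          by (subst F(4)[OF l], subst F(5)[OF l], simp only: F(3)[OF l])
      qed
      finally show ?thesis .
    qed
    have E2: "Ex a V = (\<Sum>l\<in>{1..n-1}. T a (vadd a l) * (if inS n (vadd a l) then V (vadd a l) else Ex (vadd a l) V))"
    proof -
      have "Ex a V = (\<Sum>z\<in>succ a. T a z * (if inS n z then V z else Ex z V))"
        unfolding V_def by (rule dec_V[OF aQ])
      also have "\<dots> = (\<Sum>l\<in>{1..n-1}. T a (vadd a l) * (if inS n (vadd a l) then V (vadd a l) else Ex (vadd a l) V))"
        by (rule sum_succ_reindex[OF aQ])
      finally show ?thesis .
    qed
    have E3: "ell b d a = (\<Sum>l\<in>{1..n-1}. T a (vadd a l) * ell b d (vadd a l))"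
    proof -
      have "ell b d a = (\<Sum>z\<in>succ a. T a z * ell b d z)" by (rule ell_harm[OF aQ sd, symmetric])
      also have "\<dots> = (\<Sum>l\<in>{1..n-1}. T a (vadd a l) * ell b d (vadd a l))" by (rule sum_succ_reindex[OF aQ])
      finally show ?thesis .
    qed
    have "u a = (\<Sum>l\<in>{1..n-1}. T a (vadd a l) *
          (if inS n (vadd a l) then V (vec_add (vadd a l) d) else Ex (vec_add (vadd a l) d) V)
        - T a (vadd a l) * (if inS n (vadd a l) then V (vadd a l) else Ex (vadd a l) V)
        - T a (vadd a l) * ell b d (vadd a l))"
      unfolding u_def E1 E2 E3 by (simp add: sum_subtractf)
    also have "\<dots> = (\<Sum>l\<in>{1..n-1}. T a (vadd a l) * (if inS n (vadd a l) then 0 else u (vadd a l)))"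
    proof (rule sum.cong[OF refl])
      fix l assume l: "l \<in> {1..n-1}"
      show "T a (vadd a l) *
          (if inS n (vadd a l) then V (vec_add (vadd a l) d) else Ex (vec_add (vadd a l) d) V)
        - T a (vadd a l) * (if inS n (vadd a l) then V (vadd a l) else Ex (vadd a l) V)
        - T a (vadd a l) * ell b d (vadd a l)
        = T a (vadd a l) * (if inS n (vadd a l) then 0 else u (vadd a l))"
      proof (cases "inS n (vadd a l)")
        case True
        have st: "vadd a l \<in> states n" using vadd_states[OF Q0_D(1)[OF aQ] l] .
        have nz0: "nz (vadd a l) = 0" using inS_iff[OF st] True by simp
        have "V (vec_add (vadd a l) d) - V (vadd a l) = ell b d (vadd a l)"
          unfolding V_def shift_V ell_def nz0 Hh_0 by (simp add: algebra_simps)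
        then show ?thesis using True by (simp add: algebra_simps)
      next
        case False then show ?thesis by (simp add: u_def algebra_simps)
      qed
    qed
    also have "\<dots> = (\<Sum>c\<in>succ a. T a c * (if inS n c then 0 else u c))"
      by (rule sum_succ_reindex[OF aQ, symmetric])
    finally show ?thesis .
  qed
  define K where "K = real k"
  define C where "C = (1 + \<bar>b\<bar>) * ((1 + Ts d + K^2)^2 + K^3 + 1) + (1 + \<bar>b\<bar>) * (K^2 + K^3 + 2)
      + (\<bar>1 - b/2\<bar> * (2 * Ts d) + \<bar>b/2\<bar> * (2 * Ts d)
      + (\<bar>1 - b/2\<bar> * (2 * K * Ts d + Qs d) + \<bar>b/2\<bar> * (2 * Ts d * K^2 + (Ts d)^2)))"
  have bd: "\<bar>u a\<bar> \<le> C * psi a" if a: "a \<in> Qd d" for a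
  proof -
    have aQ: "a \<in> Q0" using a by (auto simp: Qd_def)
    note F = Qd_facts[OF a]
    have b1: "\<bar>Ex (vec_add a d) V\<bar> \<le> (1 + \<bar>b\<bar>) * ((1 + Ts d + K^2)^2 + K^3 + 1) * psi a"
    proof -
      have "\<bar>Ex (vec_add a d) V\<bar> \<le> (1 + \<bar>b\<bar>) * h0 (vec_add a d)"
        unfolding V_def by (rule summ(2)[OF V_bound F(1)])
      also have "h0 (vec_add a d) = h0f (Ts a + Ts d) (nz a)" unfolding h0_def Ts_add F(2) ..
      also have "\<dots> \<le> ((1 + Ts d + K^2)^2 + K^3 + 1) * psi a"
        unfolding K_def by (rule h0_shift_bound[OF aQ Ts_nonneg])
      finally show ?thesis by (simp add: mult_left_mono mult.assoc)
    qed
    have b2: "\<bar>Ex a V\<bar> \<le> (1 + \<bar>b\<bar>) * (K^2 + K^3 + 2) * psi a"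
    proof -
      have "\<bar>Ex a V\<bar> \<le> (1 + \<bar>b\<bar>) * h0 a" unfolding V_def by (rule summ(2)[OF V_bound aQ])
      also have "\<dots> \<le> (1 + \<bar>b\<bar>) * (h0 a + 1)" by (rule mult_left_mono) auto
      also have "\<dots> \<le> (1 + \<bar>b\<bar>) * ((K^2 + K^3 + 2) * psi a)"
        unfolding K_def by (intro mult_left_mono h0_psi[OF aQ]) auto
      finally show ?thesis by (simp add: mult.assoc)
    qed
    have b3: "\<bar>ell b d a\<bar> \<le> (\<bar>1 - b/2\<bar> * (2 * Ts d) + \<bar>b/2\<bar> * (2 * Ts d)
      + (\<bar>1 - b/2\<bar> * (2 * K * Ts d + Qs d) + \<bar>b/2\<bar> * (2 * Ts d * K^2 + (Ts d)^2))) * psi a"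
      unfolding K_def by (rule ell_bound[OF aQ])
    have "\<bar>u a\<bar> \<le> \<bar>Ex (vec_add a d) V\<bar> + \<bar>Ex a V\<bar> + \<bar>ell b d a\<bar>" unfolding u_def by linarith
    also have "\<dots> \<le> C * psi a" using b1 b2 b3 unfolding C_def by (simp add: algebra_simps)
    finally show ?thesis .
  qed
  have cl: "\<And>a c. a \<in> Qd d \<Longrightarrow> c \<in> succ a \<Longrightarrow> T a c \<noteq> 0 \<Longrightarrow> \<not> inS n c \<Longrightarrow> c \<in> Qd d"
  proof -
    fix a c assume a: "a \<in> Qd d" and c: "c \<in> succ a" and nS: "\<not> inS n c"
    have aQ: "a \<in> Q0" using a by (auto simp: Qd_def)
    obtain l where l: "l \<in> {1..n-1}" "c = vadd a l" using succ_Q0_D[OF aQ c] by blast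
    show "c \<in> Qd d" using Qd_facts(6)[OF a l(1)] nS l(2) by simp
  qed
  have pc: "\<And>a. a \<in> Qd d \<Longrightarrow> (\<Sum>c\<in>succ a. T a c * (if inS n c then 0 else psi c)) \<le> rho * psi a"
    using psi_cond by (auto simp: Qd_def)
  have C0: "0 \<le> C" unfolding C_def K_def using Qs_nonneg[of d] Ts_nonneg[of d]
    by (intro add_nonneg_nonneg mult_nonneg_nonneg) auto
  have "u w = 0" using cl pc rho_bounds(1) rho_bounds(2) C0 uq bd w by (rule uni)
  then show ?thesis unfolding u_def V_def by simp
qed

end
context ch begin

lemma mo_apply: "i \<in> {1..n-1} \<Longrightarrow> minus_ones n x i = x i - 1"
  by (simp add: minus_ones_def)

lemma S_facts:
  assumes x: "inS n x"
  shows "x \<in> states n" "nz x = 0"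
    "succ x = insert (minus_ones n x) (vadd x ` {1..n-1})"
    "minus_ones n x \<notin> vadd x ` {1..n-1}"
    "T x (minus_ones n x) = (real k - real n + 1) / real k"
    "\<And>l. l \<in> {1..n-1} \<Longrightarrow> T x (vadd x l) = 1 / real k"
    "\<And>l. l \<in> {1..n-1} \<Longrightarrow> inS n (vadd x l)"
    "minus_ones n x \<in> states n"
proof -
  show st: "x \<in> states n" using x by (simp add: inS_def)
  show nz0: "nz x = 0" using inS_iff[OF st] x by simp
  show "succ x = insert (minus_ones n x) (vadd x ` {1..n-1})" by (simp add: succ_def nz0)
  have one: "1 \<in> {1..n-1}" using n3 by simp
  have x1: "1 \<le> x 1" using x one by (simp add: inS_def)
  show notin: "minus_ones n x \<notin> vadd x ` {1..n-1}"
  proof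
    assume "minus_ones n x \<in> vadd x ` {1..n-1}"
    then obtain l where "minus_ones n x = vadd x l" by blast
    then have "minus_ones n x 1 = vadd x l 1" by simp
    then show False using x1 mo_apply[OF one] by (simp add: vadd_apply split: if_splits)
  qed
  show "T x (minus_ones n x) = (real k - real n + 1) / real k"
    unfolding transX_def using st nz0 by simp
  show "T x (vadd x l) = 1 / real k" if l: "l \<in> {1..n-1}" for l
  proof -
    have "vadd x l \<in> vadd x ` {1..n-1}" using l by (rule imageI)
    then have "vadd x l \<noteq> minus_ones n x" using notin by auto
    moreover have "\<exists>l'\<in>{1..n-1}. vadd x l = vadd x l'" using l by blast
    ultimately show ?thesis unfolding transX_def using st nz0 by simp
  qed
  show "inS n (vadd x l)" if l: "l \<in> {1..n-1}" for l
    using x vadd_states[OF st l] by (auto simp: inS_def vadd_apply)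
  show "minus_ones n x \<in> states n" using st by (auto simp: states_def minus_ones_def)
qed

lemma sum_S:
  assumes x: "inS n x"
  shows "(\<Sum>z\<in>succ x. T x z * F z) = (real k - real n + 1) / real k * F (minus_ones n x)
      + (\<Sum>l=1..n-1. 1 / real k * F (vadd x l))"
proof -
  note Sf = S_facts[OF x]
  have "(\<Sum>z\<in>succ x. T x z * F z) = T x (minus_ones n x) * F (minus_ones n x) + (\<Sum>z\<in>vadd x ` {1..n-1}. T x z * F z)"
    unfolding Sf(3) using Sf(4) by (simp add: sum.insert)
  also have "(\<Sum>z\<in>vadd x ` {1..n-1}. T x z * F z) = (\<Sum>l=1..n-1. T x (vadd x l) * F (vadd x l))"
    by (simp only: sum.reindex[OF vadd_inj] o_def)
  also have "\<dots> = (\<Sum>l=1..n-1. 1 / real k * F (vadd x l))"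
    by (rule sum.cong[OF refl]) (simp add: Sf(6))
  finally show ?thesis unfolding Sf(5) .
qed

lemma DeltaV_Ex: "DeltaV n k b x = Ex x (\<lambda>z. Vfun b n z - Vfun b n x)"
  unfolding DeltaV_def Ex_def ..

lemma Ex_minus_const:
  assumes y: "y \<in> Q0"
  shows "Ex y (\<lambda>z. Vfun b n z - c) = Ex y (Vfun b n) - c"
proof -
  have gb: "\<bar>(\<lambda>_. 1::real) z\<bar> \<le> 1 * g0 z" for z :: "nat \<Rightarrow> nat"
    unfolding g0_def using zero_le_power2[of "Ts z"] by simp
  have h1: "((\<lambda>zs. P y zs * Vfun b n (last zs)) has_sum Ex y (Vfun b n)) FRP"
    unfolding Ex_def using summ(1)[OF V_bound y] by (rule has_sum_infsum)
  have h2: "((\<lambda>zs. P y zs * 1) has_sum Ex y (\<lambda>_. 1)) FRP"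
    unfolding Ex_def using summ(1)[OF gb y] by (rule has_sum_infsum)
  then have h2': "((\<lambda>zs. (- c) * (P y zs * 1)) has_sum ((- c) * Ex y (\<lambda>_. 1))) FRP"
    by (rule has_sum_cmult_right)
  have "((\<lambda>zs. P y zs * Vfun b n (last zs) + (- c) * (P y zs * 1)) has_sum (Ex y (Vfun b n) + (- c) * Ex y (\<lambda>_. 1))) FRP"
    by (rule has_sum_add[OF h1 h2'])
  then have hB: "((\<lambda>zs. P y zs * Vfun b n (last zs) + (- c) * (P y zs * 1)) has_sum (Ex y (Vfun b n) - c)) FRP"
    unfolding E1[OF y] by simp
  have "((\<lambda>zs. P y zs * (Vfun b n (last zs) - c)) has_sum (Ex y (Vfun b n) - c)) FRP"
    by (rule hs_cong[OF _ hB]) (simp add: algebra_simps)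
  then show ?thesis unfolding Ex_def by (rule infsumI)
qed

lemma kDelta:
  assumes x: "inS n x" and m: "inS n (minus_ones n x) \<or> minus_ones n x \<in> Q0"
  shows "real k * DeltaV n k b x = (real k - real n + 1) *
      ((if inS n (minus_ones n x) then Vfun b n (minus_ones n x) else Ex (minus_ones n x) (Vfun b n)) - Vfun b n x)
      + (\<Sum>l=1..n-1. Vfun b n (vadd x l) - Vfun b n x)"
proof -
  note Sf = S_facts[OF x]
  define g where "g z = Vfun b n z - Vfun b n x" for z
  have gb: "\<bar>g z\<bar> \<le> (1 + \<bar>b\<bar> + \<bar>Vfun b n x\<bar>) * g0 z" for z
  proof -
    have "\<bar>g z\<bar> \<le> \<bar>Vfun b n z\<bar> + \<bar>Vfun b n x\<bar>" unfolding g_def by linarith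
    also have "\<dots> \<le> (1 + \<bar>b\<bar>) * g0 z + \<bar>Vfun b n x\<bar> * g0 z"
    proof (rule add_mono[OF V_bound])
      have "1 \<le> g0 z" unfolding g0_def by simp
      then show "\<bar>Vfun b n x\<bar> \<le> \<bar>Vfun b n x\<bar> * g0 z" using mult_left_mono[of 1 "g0 z" "\<bar>Vfun b n x\<bar>"] by simp
    qed
    finally show ?thesis by (simp add: algebra_simps)
  qed
  define Gv where "Gv = (if inS n (minus_ones n x) then g (minus_ones n x) else Ex (minus_ones n x) g)"
  define Gw where "Gw = (if inS n (minus_ones n x) then Vfun b n (minus_ones n x) else Ex (minus_ones n x) (Vfun b n))"
  have "DeltaV n k b x = Ex x g" unfolding DeltaV_Ex g_def ..
  also have "\<dots> = (\<Sum>z\<in>succ x. T x z * (if inS n z then g z else Ex z g))"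
  proof (rule dec_Ex)
    fix c assume c: "c \<in> succ x" "T x c \<noteq> 0" "\<not> inS n c"
    then have "c = minus_ones n x" using Sf(3) Sf(7) by auto
    then have "c \<in> Q0" using m c(3) by simp
    then show "(\<lambda>zs. P c zs * g (last zs)) summable_on FRP" by (rule summ(1)[OF gb])
  qed
  also have "\<dots> = (real k - real n + 1) / real k * Gv + (\<Sum>l=1..n-1. 1 / real k * g (vadd x l))"
    unfolding sum_S[OF x] Gv_def using Sf(7) by simp
  also have "(\<Sum>l=1..n-1. 1 / real k * g (vadd x l)) = 1 / real k * (\<Sum>l=1..n-1. g (vadd x l))"
    by (simp add: sum_distrib_left)
  finally have eq: "DeltaV n k b x = (real k - real n + 1) / real k * Gv + 1 / real k * (\<Sum>l=1..n-1. g (vadd x l))" .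
  have G: "Gv = Gw - Vfun b n x"
  proof (cases "inS n (minus_ones n x)")
    case True then show ?thesis by (simp add: g_def Gv_def Gw_def)
  next
    case False
    then have "minus_ones n x \<in> Q0" using m by simp
    then show ?thesis using False unfolding g_def Gv_def Gw_def by (simp add: Ex_minus_const)
  qed
  have "real k * DeltaV n k b x = (real k - real n + 1) * (Gw - Vfun b n x) + (\<Sum>l=1..n-1. g (vadd x l))"
    unfolding eq G using k_pos by (simp add: field_simps)
  then show ?thesis unfolding Gw_def g_def .
qed

end
context ch begin

lemma card_idx: "real (card {1..n-1}) = real n - 1"
  using n3 by simp

lemma Ts_mo: assumes "\<forall>i\<in>{1..n-1}. 1 \<le> x i" shows "Ts (minus_ones n x) = Ts x - (real n - 1)"
proof -
  have "Ts (minus_ones n x) = (\<Sum>i=1..n-1. real (x i) - 1)"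
    unfolding Ts_def using assms by (intro sum.cong) (auto simp: minus_ones_def of_nat_diff)
  also have "\<dots> = Ts x - (real n - 1)" unfolding Ts_def using n3 by (simp add: sum_subtractf)
  finally show ?thesis .
qed

lemma Qs_mo: assumes "\<forall>i\<in>{1..n-1}. 1 \<le> x i" shows "Qs (minus_ones n x) = Qs x - 2 * Ts x + (real n - 1)"
proof -
  have "Qs (minus_ones n x) = (\<Sum>i=1..n-1. real (x i)^2 - 2 * real (x i) + 1)"
    unfolding Qs_def using assms by (intro sum.cong) (auto simp: minus_ones_def of_nat_diff power2_eq_square algebra_simps)
  also have "\<dots> = Qs x - 2 * Ts x + (real n - 1)" unfolding Qs_def Ts_def using n3
    by (simp add: sum.distrib sum_subtractf sum_distrib_left)
  finally show ?thesis .
qed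

lemma unit_facts:
  assumes l: "l \<in> {1..n-1}"
  shows "Dot (unit_vec l) x = real (x l)" "Qs (unit_vec l) = 1" "Ts (unit_vec l) = 1"
proof -
  have "Dot (unit_vec l) x = (\<Sum>i=1..n-1. if i = l then real (x i) else 0)"
    unfolding Dot_def by (rule sum.cong) (auto simp: unit_vec_def)
  then show "Dot (unit_vec l) x = real (x l)" using l by simp
  have "Qs (unit_vec l) = (\<Sum>i=1..n-1. if i = l then 1 else 0)"
    unfolding Qs_def by (rule sum.cong) (auto simp: unit_vec_def)
  then show "Qs (unit_vec l) = 1" using l by simp
  have "Ts (unit_vec l) = (\<Sum>i=1..n-1. if i = l then 1 else 0)"
    unfolding Ts_def by (rule sum.cong) (auto simp: unit_vec_def)
  then show "Ts (unit_vec l) = 1" using l by simp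
qed

lemma sum_vadd_V:
  "(\<Sum>l=1..n-1. Vfun b n (vadd x l) - Vfun b n x)
    = (1 - b/2) * (2 * Ts x + (real n - 1)) + b/2 * ((real n - 1) * (2 * Ts x + 1))"
proof -
  have "(\<Sum>l=1..n-1. Vfun b n (vadd x l) - Vfun b n x)
      = (\<Sum>l=1..n-1. (1 - b/2) * 2 * real (x l) + ((1 - b/2) + b/2 * (2 * Ts x + 1)))"
  proof (rule sum.cong[OF refl])
    fix l assume l: "l \<in> {1..n-1}"
    show "Vfun b n (vadd x l) - Vfun b n x = (1 - b/2) * 2 * real (x l) + ((1 - b/2) + b/2 * (2 * Ts x + 1))"
      unfolding shift_V unit_facts[OF l] by (simp add: algebra_simps)
  qed
  also have "\<dots> = (1 - b/2) * 2 * Ts x + (real n - 1) * ((1 - b/2) + b/2 * (2 * Ts x + 1))"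
    unfolding Ts_def using n3 by (simp add: sum.distrib sum_distrib_left)
  finally show ?thesis by (simp add: algebra_simps)
qed

lemma part1:
  assumes x: "inS n x" and ns: "\<not> inSstar n x"
  shows "real k * DeltaV n k b x
      = - (real k - real n) * (2 + b * (real n - 2)) * (\<Sum>i=1..n-1. real (x i))
        + (real n - 1) * (real k - real n + 2 + b * ((real k - real n + 1) * (real n - 2)) / 2)"
proof -
  have mS: "inS n (minus_ones n x)" using x ns by (simp add: inSstar_def)
  have ge1: "\<forall>i\<in>{1..n-1}. 1 \<le> x i" using x by (simp add: inS_def)
  have "real k * DeltaV n k b x = (real k - real n + 1) * (Vfun b n (minus_ones n x) - Vfun b n x)
      + (\<Sum>l=1..n-1. Vfun b n (vadd x l) - Vfun b n x)"
    using kDelta[OF x] mS by simp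
  also have "\<dots> = (real k - real n + 1) * ((1 - b/2) * (- 2 * Ts x + (real n - 1)) + b/2 * ((Ts x - (real n - 1))^2 - (Ts x)^2))
      + ((1 - b/2) * (2 * Ts x + (real n - 1)) + b/2 * ((real n - 1) * (2 * Ts x + 1)))"
  proof -
    have "Vfun b n (minus_ones n x) - Vfun b n x = (1 - b/2) * (- 2 * Ts x + (real n - 1)) + b/2 * ((Ts x - (real n - 1))^2 - (Ts x)^2)"
      unfolding V_eq Ts_mo[OF ge1] Qs_mo[OF ge1] by (simp add: algebra_simps)
    then show ?thesis unfolding sum_vadd_V by simp
  qed
  also have "\<dots> = - (real k - real n) * (2 + b * (real n - 2)) * Ts x
        + (real n - 1) * (real k - real n + 2 + b * ((real k - real n + 1) * (real n - 2)) / 2)"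
    by (simp add: power2_eq_square algebra_simps divide_simps)
  finally show ?thesis unfolding Ts_def .
qed

definition xs :: "nat \<Rightarrow> nat \<Rightarrow> nat" where
  "xs j i = (if 1 \<le> i \<and> i \<le> j then 1 else if j < i \<and> i \<le> n - 1 then 2 else 0)"

definition pat :: "nat \<Rightarrow> (nat \<Rightarrow> nat) \<Rightarrow> bool" where
  "pat j x \<longleftrightarrow> x \<in> states n \<and> (\<forall>i\<in>{1..j}. x i = 1) \<and> (\<forall>i\<in>{j+1..n-1}. 2 \<le> x i)"

lemma pat_xs: "j \<le> n - 2 \<Longrightarrow> pat j (xs j)"
  using n3 unfolding pat_def xs_def states_def by auto

lemma pat_ge1: assumes "pat j x" "j \<le> n - 2" shows "\<forall>i\<in>{1..n-1}. 1 \<le> x i"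
proof
  fix i assume i: "i \<in> {1..n-1}"
  show "1 \<le> x i"
  proof (cases "i \<le> j")
    case True then show ?thesis using assms i unfolding pat_def by auto
  next
    case False then have "i \<in> {j+1..n-1}" using i by auto
    then show ?thesis using assms unfolding pat_def by fastforce
  qed
qed

lemma pat_inS: "pat j x \<Longrightarrow> j \<le> n - 2 \<Longrightarrow> inS n x"
  using pat_ge1 unfolding inS_def pat_def by blast

lemma pat_Q0:
  assumes p: "pat j x" and jj: "1 \<le> j" "j \<le> n - 2"
  shows "minus_ones n x \<in> Q0" "nz (minus_ones n x) = j"
proof -
  have st: "minus_ones n x \<in> states n" using S_facts(8)[OF pat_inS[OF p jj(2)]] .
  have Z: "Zs (minus_ones n x) = {1..j}"
  proof
    show "Zs (minus_ones n x) \<subseteq> {1..j}"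
    proof
      fix i assume "i \<in> Zs (minus_ones n x)"
      then have i: "i \<in> {1..n-1}" "x i - 1 = 0" by (auto simp: Zs_def minus_ones_def)
      show "i \<in> {1..j}"
      proof (rule ccontr)
        assume "i \<notin> {1..j}"
        then have "i \<in> {j+1..n-1}" using i by auto
        then have "2 \<le> x i" using p unfolding pat_def by blast
        then show False using i by simp
      qed
    qed
    show "{1..j} \<subseteq> Zs (minus_ones n x)"
      using p jj unfolding pat_def Zs_def minus_ones_def by auto
  qed
  show nzj: "nz (minus_ones n x) = j" unfolding nz_Zs Z by simp
  then have "\<not> inS n (minus_ones n x)" using inS_iff[OF st] jj by simp
  then show "minus_ones n x \<in> Q0" unfolding Q0_def using st nzj jj by simp
qed

lemma Hh_alt: "Hh j = (\<Sum>i=2..j+1. 1 / (real k - real n + real i))"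
proof (induction j)
  case 0 show ?case by (simp add: Hh_def)
next
  case (Suc j)
  have "Hh (Suc j) = Hh j + 1 / (real k - real n + 1 + real (Suc j))" by (simp add: Hh_step)
  also have "\<dots> = (\<Sum>i=2..j+1. 1 / (real k - real n + real i)) + 1 / (real k - real n + real (Suc j + 1))"
    unfolding Suc.IH by (simp add: algebra_simps)
  also have "\<dots> = (\<Sum>i=2..Suc j+1. 1 / (real k - real n + real i))" by (simp add: sum.cl_ivl_Suc)
  finally show ?case .
qed

lemma pat_main:
  assumes p: "pat j x" and jj: "1 \<le> j" "j \<le> n - 2"
  shows "real k * DeltaV n k b x = real k * DeltaV n k b (xs j)
    + ((real k - real n + 1) * (2 + b * (real k - 1)) * (\<Sum>i=2..j+1. 1 / (real k - real n + real i))
        - (real k - real n) * (2 + b * (real n - 2)))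
      * ((\<Sum>i=j+1..n-1. real (x i)) - (\<Sum>i=j+1..n-1. real (xs j i)))"
proof -
  define y where "y = xs j"
  define d where "d i = x i - y i" for i
  have py: "pat j y" unfolding y_def by (rule pat_xs[OF jj(2)])
  have xst: "x \<in> states n" using p by (simp add: pat_def)
  have y2: "y i = 2" if "i \<in> {j+1..n-1}" for i using that unfolding y_def xs_def by auto
  have xy: "x i = y i" if "i \<notin> {j+1..n-1}" for i
  proof (cases "i \<in> {1..j}")
    case True then have "x i = 1" "y i = 1" using p unfolding pat_def y_def xs_def by auto
    then show ?thesis by simp
  next
    case False
    then have "i \<notin> {1..n-1}" using that jj by auto
    then have "x i = 0" "y i = 0" using xst jj n3 unfolding states_def y_def xs_def by auto
    then show ?thesis by simp
  qed
  have dz: "d i = 0" if "i \<notin> {j+1..n-1}" for i using xy[OF that] unfolding d_def by simp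
  have xge: "2 \<le> x i" if "i \<in> {j+1..n-1}" for i using p that unfolding pat_def by blast
  have xeq: "x = vec_add y d"
  proof (rule ext)
    fix i show "x i = vec_add y d i"
    proof (cases "i \<in> {j+1..n-1}")
      case True then show ?thesis using y2[OF True] xge[OF True] by (simp add: vec_add_def d_def)
    next
      case False then have "x i = y i" by (rule xy)
      then show ?thesis unfolding vec_add_def d_def by simp
    qed
  qed
  have moeq: "minus_ones n x = vec_add (minus_ones n y) d"
  proof (rule ext)
    fix i show "minus_ones n x i = vec_add (minus_ones n y) d i"
    proof (cases "i \<in> {j+1..n-1}")
      case True then show ?thesis using y2[OF True] xge[OF True] jj
        by (simp add: vec_add_def d_def minus_ones_def)
    next
      case False then have d0: "d i = 0" by (rule dz)
      have "x i = y i" using False by (rule xy)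
      then show ?thesis unfolding vec_add_def using d0 by (simp add: minus_ones_def)
    qed
  qed
  have xS: "inS n x" by (rule pat_inS[OF p jj(2)])
  have yS: "inS n y" by (rule pat_inS[OF py jj(2)])
  note Qx = pat_Q0[OF p jj]
  note Qy = pat_Q0[OF py jj]
  have sd: "supp_ok d (minus_ones n y)"
    unfolding supp_ok_def
  proof (intro allI impI)
    fix i assume di: "d i \<noteq> 0"
    have i: "i \<in> {j+1..n-1}"
    proof (rule ccontr)
      assume "i \<notin> {j+1..n-1}"
      then have "d i = 0" by (rule dz)
      then show False using di by simp
    qed
    then have "i \<in> {1..n-1}" using jj by auto
    then show "minus_ones n y i \<noteq> 0" using y2[OF i] by (simp add: minus_ones_def)
  qed
  have moQd: "minus_ones n y \<in> Qd d" unfolding Qd_def using Qy(1) sd by simp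
  define D where "D = Ts d"
  define V where "V = Vfun b n"
  define H where "H = Hh j"
  define al where "al = 1 - b/2"
  define be where "be = b/2"
  have dotY: "Dot d y = 2 * D"
  proof -
    have "Dot d y = (\<Sum>i=1..n-1. real (d i) * 2)"
      unfolding Dot_def
    proof (rule sum.cong[OF refl])
      fix i assume "i \<in> {1..n-1}"
      show "real (d i) * real (y i) = real (d i) * 2"
        by (cases "i \<in> {j+1..n-1}") (auto simp: y2 dz)
    qed
    then show ?thesis unfolding D_def Ts_def by (simp add: sum_distrib_right[symmetric])
  qed
  have dotMo: "Dot d (minus_ones n y) = D"
  proof -
    have "Dot d (minus_ones n y) = (\<Sum>i=1..n-1. real (d i))"
      unfolding Dot_def
    proof (rule sum.cong[OF refl])
      fix i assume i: "i \<in> {1..n-1}"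
      show "real (d i) * real (minus_ones n y i) = real (d i)"
        using i by (cases "i \<in> {j+1..n-1}") (auto simp: y2 dz minus_ones_def)
    qed
    then show ?thesis unfolding D_def Ts_def .
  qed
  have TsX: "Ts x = Ts y + D" unfolding D_def xeq Ts_add ..
  have TsMo: "Ts (minus_ones n y) = Ts y - (real n - 1)" by (rule Ts_mo[OF pat_ge1[OF py jj(2)]])
  have kx: "real k * DeltaV n k b x = (real k - real n + 1) * (Ex (minus_ones n x) V - V x)
      + (\<Sum>l=1..n-1. V (vadd x l) - V x)"
    using kDelta[OF xS disjI2[OF Qx(1)]] Q0_D(2)[OF Qx(1)] unfolding V_def by simp
  have ky: "real k * DeltaV n k b y = (real k - real n + 1) * (Ex (minus_ones n y) V - V y)
      + (\<Sum>l=1..n-1. V (vadd y l) - V y)"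
    using kDelta[OF yS disjI2[OF Qy(1)]] Q0_D(2)[OF Qy(1)] unfolding V_def by simp
  have exx: "Ex (minus_ones n x) V = Ex (minus_ones n y) V + ell b d (minus_ones n y)"
    unfolding moeq V_def by (rule shift[OF moQd])
  have vx: "V x = V y + (al * (2 * (2 * D) + Qs d) + be * (2 * D * Ts y + D^2))"
    using shift_V[of b y d] unfolding xeq[symmetric] V_def al_def be_def dotY D_def by simp
  have sx: "(\<Sum>l=1..n-1. V (vadd x l) - V x) = (\<Sum>l=1..n-1. V (vadd y l) - V y) + 2 * al * D + 2 * be * (real n - 1) * D"
    unfolding V_def sum_vadd_V TsX al_def be_def by (simp add: algebra_simps)
  have ellv: "ell b d (minus_ones n y) = al * (2 * D + 2 * H * D + Qs d) + be * (2 * D * (Ts y - (real n - 1) + real k * H) + D^2)"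
    unfolding ell_def dotMo Qy(2) TsMo al_def be_def H_def D_def ..
  have "real k * DeltaV n k b x = real k * DeltaV n k b y
      + ((real k - real n + 1) * (2 + b * (real k - 1)) * H - (real k - real n) * (2 + b * (real n - 2))) * D"
    unfolding kx ky exx sx unfolding vx ellv unfolding al_def be_def by (simp add: algebra_simps)
  moreover have "D = (\<Sum>i=j+1..n-1. real (x i)) - (\<Sum>i=j+1..n-1. real (xs j i))"
  proof -
    have "D = (\<Sum>i\<in>{1..j} \<union> {j+1..n-1}. real (d i))"
      unfolding D_def Ts_def using jj by (intro sum.cong) auto
    also have "\<dots> = (\<Sum>i\<in>{1..j}. real (d i)) + (\<Sum>i=j+1..n-1. real (d i))"
      by (rule sum.union_disjoint) auto
    also have "(\<Sum>i\<in>{1..j}. real (d i)) = 0" using dz jj by (intro sum.neutral) auto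
    also have "(\<Sum>i=j+1..n-1. real (d i)) = (\<Sum>i=j+1..n-1. real (x i) - real (y i))"
    proof (rule sum.cong[OF refl])
      fix i assume i: "i \<in> {j+1..n-1}"
      show "real (d i) = real (x i) - real (y i)" using y2[OF i] xge[OF i] unfolding d_def by (simp add: of_nat_diff)
    qed
    finally show ?thesis unfolding y_def by (simp add: sum_subtractf)
  qed
  ultimately show ?thesis unfolding y_def H_def Hh_alt by simp
qed

end

theorem proposition7p4:
  fixes n k :: nat and b :: real
  assumes "3 \<le> n" and "n \<le> k"
  shows "(\<forall>x. inS n x \<and> \<not> inSstar n x \<longrightarrow>
            real k * DeltaV n k b x
              = - (real k - real n) * (2 + b * (real n - 2)) * (\<Sum>i=1..n-1. real (x i))
                + (real n - 1) * (real k - real n + 2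
                    + b * ((real k - real n + 1) * (real n - 2)) / 2))
       \<and> (\<exists>\<delta> :: nat \<Rightarrow> real.
            (\<forall>j\<in>{1..n-2}. \<forall>x. x \<in> states n \<and> (\<forall>i\<in>{1..j}. x i = 1)
                \<and> (\<forall>i\<in>{j+1..n-1}. 2 \<le> x i) \<longrightarrow>
              real k * DeltaV n k b x
                = ((real k - real n + 1) * (2 + b * (real k - 1))
                      * (\<Sum>i=2..j+1. 1 / (real k - real n + real i))
                    - (real k - real n) * (2 + b * (real n - 2)))
                  * (\<Sum>i=j+1..n-1. real (x i))
                  + \<delta> j)
            \<and> (\<exists>M. \<forall>j\<in>{1..n-2}. \<bar>\<delta> j\<bar> \<le> M))"
proof -
  interpret ch n k using assms by unfold_locales
  define c where "c j = ((real k - real n + 1) * (2 + b * (real k - 1))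
                      * (\<Sum>i=2..j+1. 1 / (real k - real n + real i))
                    - (real k - real n) * (2 + b * (real n - 2)))" for j :: nat
  define \<delta> where "\<delta> j = real k * DeltaV n k b (xs j) - c j * (\<Sum>i=j+1..n-1. real (xs j i))" for j
  have A: "\<forall>x. inS n x \<and> \<not> inSstar n x \<longrightarrow>
            real k * DeltaV n k b x
              = - (real k - real n) * (2 + b * (real n - 2)) * (\<Sum>i=1..n-1. real (x i))
                + (real n - 1) * (real k - real n + 2
                    + b * ((real k - real n + 1) * (real n - 2)) / 2)"
    using part1 by blast
  have B: "\<forall>j\<in>{1..n-2}. \<forall>x. x \<in> states n \<and> (\<forall>i\<in>{1..j}. x i = 1)
                \<and> (\<forall>i\<in>{j+1..n-1}. 2 \<le> x i) \<longrightarrow>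
              real k * DeltaV n k b x = c j * (\<Sum>i=j+1..n-1. real (x i)) + \<delta> j"
  proof (intro ballI allI impI)
    fix j x assume j: "j \<in> {1..n-2}" and x: "x \<in> states n \<and> (\<forall>i\<in>{1..j}. x i = 1) \<and> (\<forall>i\<in>{j+1..n-1}. 2 \<le> x i)"
    have p: "pat j x" using x unfolding pat_def by blast
    have j1: "1 \<le> j" "j \<le> n - 2" using j by auto
    show "real k * DeltaV n k b x = c j * (\<Sum>i=j+1..n-1. real (x i)) + \<delta> j"
      using pat_main[OF p j1, of b] unfolding \<delta>_def c_def by (simp add: algebra_simps)
  qed
  have C: "\<exists>M. \<forall>j\<in>{1..n-2}. \<bar>\<delta> j\<bar> \<le> M"
  proof (intro exI ballI)
    fix j assume "j \<in> {1..n-2}"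
    then show "\<bar>\<delta> j\<bar> \<le> (\<Sum>j\<in>{1..n-2}. \<bar>\<delta> j\<bar>)"
      by (intro member_le_sum) auto
  qed
  show ?thesis using A B C unfolding c_def by blast
qed

end
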